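(* For $n\ge1$, $\beta>0$ and $h\in\mathbb{R}$, let $\sigma=(\sigma_1,\dots,\sigma_n)\in\{-1,1\}^n$ have law \[ \mathbb{P}(\sigma)=Z^{-1}\exp\Bigl\{\frac{\beta}{n}\sum_{i<j}\sigma_i\sigma_j+h\sum_i\sigma_i\Bigr\}, \] with $Z$ the normalizing constant, let $W=\sum_{i=1}^n\sigma_i$, and let $\delta=\delta(n)=(1-(-1)^n)/2$. If $0<\beta<1$ and $h=0$, there is a constant $C$ depending only on $\beta$ such that for all $n$, \[ d_{\mathrm{loc}}\Bigl(\mathcal{L}\bigl(\tfrac{W+\delta}{2}\bigr),\mathrm{TP}\bigl(0,\tfrac{n}{4(1-\beta)}\bigr)\Bigr)\le Cn^{-3/4},\qquad d_{\mathrm{TV}}\Bigl(\mathcal{L}\bigl(\tfrac{W+\delta}{2}\bigr),\mathrm{TP}\bigl(0,\tfrac{n}{4(1-\beta)}\bigr)\Bigr)\le Cn^{-1/3}. \] If $0<\beta<1$ and $h\in\mathbb{R}$, and $m_0$ is the unique solution of $m=\tanh(\beta m+h)$, then as $n\to\infty$, \[ d_{\mathrm{loc}}\Bigl(\mathcal{L}\bigl(\tfrac{W+\delta}{2}\bigr),\mathrm{TP}\Bigl(\tfrac{nm_0}{2},\tfrac{n(1-m_0^2)}{4(1-\beta+\beta m_0^2)}\Bigr)\Bigr)=o(n^{-1/2}). \]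
   Context: For integer-supported laws with distribution functions $F,G$ (where $F(j)=\mathbb{P}[X\le j]$), $d_{\mathrm{loc}}(F,G)=\sup_{j\in\mathbb{Z}}|\Delta F(j)-\Delta G(j)|$ and $d_{\mathrm{TV}}(F,G)=\frac12\sum_{j\in\mathbb{Z}}|\Delta F(j)-\Delta G(j)|$, where $\Delta F(j)=F(j+1)-F(j)$. Translated Poisson: for $\mu\in\mathbb{R}$, $s^2>0$, $Z\sim\mathrm{TP}(\mu,s^2)$ means $Z-\lfloor\mu-s^2\rfloor\sim\mathrm{Po}(s^2+\gamma)$ with $\gamma=\mu-s^2-\lfloor\mu-s^2\rfloor$. Note $(W+\delta)/2$ is integer valued. *)

theory Defs
  imports "HOL-Analysis.Analysis" "HOL-Library.Landau_Symbols"
begin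

definition cw_configs :: "nat \<Rightarrow> int list set" where
  "cw_configs n = {xs. length xs = n \<and> set xs \<subseteq> {-1, 1}}"

definition cw_weight :: "real \<Rightarrow> real \<Rightarrow> nat \<Rightarrow> int list \<Rightarrow> real" where
  "cw_weight \<beta> h n s = exp (\<beta> / real n *
      (\<Sum>i<n. \<Sum>j<n. if i < j then real_of_int (s ! i * s ! j) else 0)
      + h * (\<Sum>i<n. real_of_int (s ! i)))"

definition cw_Z :: "real \<Rightarrow> real \<Rightarrow> nat \<Rightarrow> real" where
  "cw_Z \<beta> h n = (\<Sum>s\<in>cw_configs n. cw_weight \<beta> h n s)"

definition cw_W :: "int list \<Rightarrow> int" where
  "cw_W s = sum_list s"

definition cw_delta :: "nat \<Rightarrow> int" where
  "cw_delta n = (1 - (-1) ^ n) div 2"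

text \<open>Probability mass function of (W + delta)/2 (an integer, since W + delta is even).\<close>
definition cw_pmf :: "real \<Rightarrow> real \<Rightarrow> nat \<Rightarrow> int \<Rightarrow> real" where
  "cw_pmf \<beta> h n k =
     (\<Sum>s\<in>{s\<in>cw_configs n. (cw_W s + cw_delta n) div 2 = k}. cw_weight \<beta> h n s) / cw_Z \<beta> h n"

text \<open>Translated Poisson TP(mu, s2): Z - floor(mu - s2) ~ Po(s2 + gamma).\<close>
definition tp_pmf :: "real \<Rightarrow> real \<Rightarrow> int \<Rightarrow> real" where
  "tp_pmf \<mu> s2 k =
     (let a = \<lfloor>\<mu> - s2\<rfloor>; \<gamma> = \<mu> - s2 - real_of_int a; lam = s2 + \<gamma> in
      if a \<le> k then exp (- lam) * lam ^ nat (k - a) / fact (nat (k - a)) else 0)"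

definition cdf_of :: "(int \<Rightarrow> real) \<Rightarrow> int \<Rightarrow> real" where
  "cdf_of p j = infsum p {..j}"

definition Delta :: "(int \<Rightarrow> real) \<Rightarrow> int \<Rightarrow> real" where
  "Delta F j = F (j + 1) - F j"

definition d_loc :: "(int \<Rightarrow> real) \<Rightarrow> (int \<Rightarrow> real) \<Rightarrow> real" where
  "d_loc F G = (SUP j\<in>(UNIV::int set). \<bar>Delta F j - Delta G j\<bar>)"

definition d_TV :: "(int \<Rightarrow> real) \<Rightarrow> (int \<Rightarrow> real) \<Rightarrow> real" where
  "d_TV F G = infsum (\<lambda>j. \<bar>Delta F j - Delta G j\<bar>) (UNIV::int set) / 2"

end

theory Submission
  imports Defs "HOL-Real_Asymp.Real_Asymp"
begin


lemma Delta_cdf: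
  fixes p :: "int \<Rightarrow> real"
  assumes "p summable_on UNIV"
  shows "Delta (cdf_of p) j = p (j+1)"
proof -
  have s: "p summable_on {..j}" using assms summable_on_subset by blast
  have e: "{..j+1} = insert (j+1) {..j}" by auto
  show ?thesis unfolding Delta_def cdf_of_def e
    by (subst infsum_insert[OF s]) auto
qed

lemma d_loc_le:
  fixes p q :: "int \<Rightarrow> real"
  assumes "p summable_on UNIV" "q summable_on UNIV" "\<And>k. \<bar>p k - q k\<bar> \<le> B"
  shows "d_loc (cdf_of p) (cdf_of q) \<le> B"
  unfolding d_loc_def Delta_cdf[OF assms(1)] Delta_cdf[OF assms(2)]
  by (rule cSUP_least) (auto intro: assms(3))

lemma d_TV_eq:
  fixes p q :: "int \<Rightarrow> real"
  assumes "p summable_on UNIV" "q summable_on UNIV"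
  shows "d_TV (cdf_of p) (cdf_of q) = infsum (\<lambda>k. \<bar>p k - q k\<bar>) UNIV / 2"
proof -
  have b: "bij_betw (\<lambda>j::int. j+1) UNIV UNIV"
    by (rule bij_betwI[where g="\<lambda>j. j - 1"]) auto
  show ?thesis unfolding d_TV_def Delta_cdf[OF assms(1)] Delta_cdf[OF assms(2)]
    using infsum_reindex_bij_betw[OF b, of "\<lambda>k. \<bar>p k - q k\<bar>"] by simp
qed

lemma abs_diff_le_sum: "(0::real) \<le> a \<Longrightarrow> 0 \<le> b \<Longrightarrow> \<bar>a - b\<bar> \<le> a + b" by arith

lemma abs_diff_summable:
  fixes p q :: "int \<Rightarrow> real"
  assumes "p summable_on UNIV" "q summable_on UNIV" "\<And>k. p k \<ge> 0" "\<And>k. q k \<ge> 0"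
  shows "(\<lambda>k. \<bar>p k - q k\<bar>) summable_on A"
proof -
  have "(\<lambda>k. p k + q k) summable_on UNIV" using assms summable_on_add by blast
  hence "(\<lambda>k. \<bar>p k - q k\<bar>) summable_on UNIV"
    by (rule summable_on_comparison_test) (use assms in \<open>auto intro: abs_diff_le_sum\<close>)
  thus ?thesis using summable_on_subset by blast
qed

lemma TV_split_bound:
  fixes p q :: "int \<Rightarrow> real"
  assumes "p summable_on UNIV" "q summable_on UNIV" "\<And>k. p k \<ge> 0" "\<And>k. q k \<ge> 0"
    and "finite I" and "\<And>k. k \<in> I \<Longrightarrow> \<bar>p k - q k\<bar> \<le> e k"
    and "infsum p (-I) \<le> \<tau>1" "infsum q (-I) \<le> \<tau>2"
  shows "infsum (\<lambda>k. \<bar>p k - q k\<bar>) UNIV \<le> sum e I + \<tau>1 + \<tau>2"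
proof -
  let ?f = "\<lambda>k. \<bar>p k - q k\<bar>"
  have sI: "?f summable_on I" and sC: "?f summable_on (-I)"
    using abs_diff_summable[OF assms(1-4)] by auto
  have "infsum ?f UNIV = infsum ?f (I \<union> -I)" by simp
  also have "\<dots> = infsum ?f I + infsum ?f (-I)"
    by (rule infsum_Un_disjoint[OF sI sC]) auto
  also have "infsum ?f I = sum ?f I" using assms(5) by simp
  also have "\<dots> \<le> sum e I" by (rule sum_mono) (use assms(6) in auto)
  also have "infsum ?f (-I) \<le> infsum (\<lambda>k. p k + q k) (-I)"
  proof (rule infsum_mono[OF sC])
    show "(\<lambda>k. p k + q k) summable_on - I"
      using assms(1,2) summable_on_add summable_on_subset by blast
  qed (use assms(3,4) in \<open>auto intro: abs_diff_le_sum\<close>)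
  also have "\<dots> = infsum p (-I) + infsum q (-I)"
    by (rule infsum_add) (use assms(1,2) summable_on_subset in blast)+
  finally show ?thesis using assms(7,8) by linarith
qed


lemma compare_window:
  fixes p q :: "int \<Rightarrow> real" and I :: "int set"
  assumes fin: "finite I"
    and pos: "\<And>k. k \<in> I \<Longrightarrow> p k > 0" "\<And>k. k \<in> I \<Longrightarrow> q k > 0"
    and lg: "\<And>k. k \<in> I \<Longrightarrow> \<bar>ln (p k) - ln (q k) - L\<bar> \<le> \<epsilon>"
    and e: "0 \<le> \<epsilon>" "\<epsilon> \<le> 1/4" and t: "0 \<le> \<tau>" "\<tau> \<le> 1/2"
    and sp: "1 - \<tau> \<le> sum p I" "sum p I \<le> 1"
    and sq: "1 - \<tau> \<le> sum q I" "sum q I \<le> 1"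
    and k: "k \<in> I"
  shows "\<bar>p k - q k\<bar> \<le> 8 * (\<epsilon> + \<tau>) * q k"
proof -
  define c where "c = exp L"
  define \<eta> where "\<eta> = (\<lambda>k. ln (p k) - ln (q k) - L)"
  have c0: "c > 0" unfolding c_def by simp
  have peq: "p i = c * (q i * exp (\<eta> i))" if "i \<in> I" for i
  proof -
    have "exp (\<eta> i) = p i / q i * inverse c" unfolding \<eta>_def c_def
      using pos[OF that] by (simp add: exp_diff exp_add exp_minus field_simps)
    thus ?thesis using pos[OF that] c0 by (simp add: field_simps)
  qed
  have eb: "\<bar>\<eta> i\<bar> \<le> \<epsilon>" if "i \<in> I" for i using lg[OF that] unfolding \<eta>_def .
  have S: "sum p I = c * (\<Sum>i\<in>I. q i * exp (\<eta> i))"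
    by (simp add: sum_distrib_left peq)
  have up: "(\<Sum>i\<in>I. q i * exp (\<eta> i)) \<le> exp \<epsilon> * sum q I"
    unfolding sum_distrib_left
  proof (rule sum_mono)
    fix i assume "i \<in> I"
    hence "exp (\<eta> i) \<le> exp \<epsilon>" using eb[of i] by (simp add: abs_le_iff)
    thus "q i * exp (\<eta> i) \<le> exp \<epsilon> * q i" using pos(2)[OF \<open>i\<in>I\<close>]
      by (simp add: mult.commute mult_left_mono)
  qed
  have lo: "exp (-\<epsilon>) * sum q I \<le> (\<Sum>i\<in>I. q i * exp (\<eta> i))"
    unfolding sum_distrib_left
  proof (rule sum_mono)
    fix i assume "i \<in> I"
    hence "exp (-\<epsilon>) \<le> exp (\<eta> i)" using eb[of i] by (simp add: abs_le_iff)
    thus "exp (-\<epsilon>) * q i \<le> q i * exp (\<eta> i)" using pos(2)[OF \<open>i\<in>I\<close>]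
      by (simp add: mult.commute mult_left_mono)
  qed
  have t1: "1 - \<tau> > 0" using t by simp
  have c_lo: "(1 - \<tau>) * exp (-\<epsilon>) \<le> c"
  proof -
    have "1 - \<tau> \<le> c * (exp \<epsilon> * sum q I)" using sp(1) S up c0
      by (metis mult_left_mono less_imp_le order_trans)
    also have "\<dots> \<le> c * exp \<epsilon>" using sq(2) c0 by simp
    finally have "1 - \<tau> \<le> c * exp \<epsilon>" .
    hence "(1 - \<tau>) * exp (-\<epsilon>) \<le> c * exp \<epsilon> * exp (-\<epsilon>)" by simp
    thus ?thesis by (simp add: mult.assoc exp_minus_inverse)
  qed
  have c_up: "c * ((1 - \<tau>) * exp (-\<epsilon>)) \<le> 1"
  proof -
    have "c * ((1 - \<tau>) * exp (-\<epsilon>)) \<le> c * (exp (-\<epsilon>) * sum q I)"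
      using sq(1) c0 by (simp add: mult.commute mult_left_mono)
    also have "\<dots> \<le> c * (\<Sum>i\<in>I. q i * exp (\<eta> i))" using lo c0 by simp
    also have "\<dots> \<le> 1" using S sp(2) by simp
    finally show ?thesis .
  qed
  have qk: "q k > 0" using pos(2)[OF k] .
  have ek: "\<bar>\<eta> k\<bar> \<le> \<epsilon>" using eb[OF k] .
  define r where "r = c * exp (\<eta> k)"
  have pk: "p k = r * q k" using peq[OF k] unfolding r_def by simp
  have r_up: "r \<le> 1 + 8 * (\<epsilon> + \<tau>)"
  proof -
    have "r \<le> c * exp \<epsilon>" unfolding r_def using ek c0 by (simp add: abs_le_iff)
    also have "c \<le> exp \<epsilon> / (1 - \<tau>)"
    proof -
      have "c * (1 - \<tau>) \<le> exp \<epsilon>" using c_up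
        by (simp add: exp_minus field_simps)
      thus ?thesis using t1 by (simp add: field_simps)
    qed
    hence "c * exp \<epsilon> \<le> exp \<epsilon> / (1 - \<tau>) * exp \<epsilon>" by (rule mult_right_mono) simp
    also have "\<dots> = exp (2*\<epsilon>) / (1 - \<tau>)" by (simp add: exp_add[symmetric])
    also have "\<dots> \<le> (1 + 4*\<epsilon>) * (1 + 2*\<tau>)"
    proof -
      have a: "exp (2*\<epsilon>) \<le> 1 + 4*\<epsilon>" using real_exp_bound_lemma[of "2*\<epsilon>"] e by simp
      have tt: "\<tau>*\<tau> \<le> \<tau>*(1/2)" by (rule mult_left_mono) (use t in auto)
      have b: "1 / (1 - \<tau>) \<le> 1 + 2*\<tau>" using t t1 tt by (simp add: field_simps)
      have "exp (2*\<epsilon>) / (1 - \<tau>) = exp (2*\<epsilon>) * (1 / (1 - \<tau>))" by simp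
      also have "\<dots> \<le> (1 + 4*\<epsilon>) * (1 + 2*\<tau>)"
        by (rule mult_mono[OF a b]) (use e t1 in auto)
      finally show ?thesis .
    qed
    also have "\<dots> \<le> 1 + 8 * (\<epsilon> + \<tau>)"
    proof -
      have "\<epsilon>*\<tau> \<le> (1/4)*\<tau>" by (rule mult_right_mono) (use e t in auto)
      thus ?thesis using e t by (simp add: algebra_simps)
    qed
    finally show ?thesis .
  qed
  have r_lo: "1 - 8 * (\<epsilon> + \<tau>) \<le> r"
  proof -
    have "(1 - \<tau>) * exp (-\<epsilon>) * exp (-\<epsilon>) \<le> c * exp (\<eta> k)"
      by (rule mult_mono[OF c_lo]) (use ek t1 c0 in \<open>auto simp: abs_le_iff\<close>)
    moreover have "(1 - \<tau>) * exp (-\<epsilon>) * exp (-\<epsilon>) = (1 - \<tau>) * exp (-(2*\<epsilon>))"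
      by (simp add: exp_add[symmetric])
    moreover have "(1 - \<tau>) * (1 - 2*\<epsilon>) \<le> (1 - \<tau>) * exp (-(2*\<epsilon>))"
      using exp_ge_add_one_self[of "-(2*\<epsilon>)"] t1 by simp
    moreover have "1 - 8 * (\<epsilon> + \<tau>) \<le> (1 - \<tau>) * (1 - 2*\<epsilon>)"
    proof -
      have "0 \<le> \<epsilon>*\<tau>" using e t by simp
      thus ?thesis using e t by (simp add: algebra_simps)
    qed
    ultimately show ?thesis unfolding r_def by linarith
  qed
  have "\<bar>p k - q k\<bar> = \<bar>r - 1\<bar> * q k" proof -
    have "p k - q k = (r - 1) * q k" using pk by (simp add: algebra_simps)
    thus ?thesis using qk by (simp add: abs_mult)
  qed
  also have "\<dots> \<le> 8 * (\<epsilon> + \<tau>) * q k" using r_up r_lo qk by (intro mult_right_mono) auto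
  finally show ?thesis .
qed


lemma geom_has_sum:
  fixes \<rho> :: real
  assumes "0 \<le> \<rho>" "\<rho> < 1"
  shows "((\<lambda>t::nat. \<rho>^L * \<rho>^t) has_sum (\<rho>^L / (1-\<rho>))) UNIV"
proof -
  have "((\<lambda>t::nat. \<rho>^t) has_sum (1 / (1-\<rho>))) UNIV"
    by (rule sums_nonneg_imp_has_sum) (use geometric_sums[of \<rho>] assms in auto)
  from has_sum_cmult_right[OF this, of "\<rho>^L"] show ?thesis by simp
qed

lemma geom_tail_up:
  fixes f :: "int \<Rightarrow> real"
  assumes nn: "\<And>i. 0 \<le> f i" and le1: "\<And>i. f i \<le> 1" and r: "0 \<le> \<rho>" "\<rho> < 1"
    and step: "\<And>i. i \<ge> b \<Longrightarrow> f (i+1) \<le> \<rho> * f i" and sm: "f summable_on UNIV"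
  shows "infsum f {b + int L..} \<le> \<rho>^L / (1-\<rho>)"
proof -
  have pw: "f (b + int t) \<le> \<rho>^t" for t
  proof (induction t)
    case 0 show ?case using le1 by simp
  next
    case (Suc t)
    have "f (b + int (Suc t)) = f ((b + int t) + 1)" by (simp add: algebra_simps)
    also have "\<dots> \<le> \<rho> * f (b + int t)" by (rule step) simp
    also have "\<dots> \<le> \<rho> * \<rho>^t" by (rule mult_left_mono[OF Suc r(1)])
    finally show ?case by simp
  qed
  define A where "A = {b + int L..}"
  have bij: "bij_betw (\<lambda>t::nat. b + int L + int t) UNIV A"
    unfolding A_def
    by (rule bij_betwI[where g="\<lambda>i. nat (i - b - int L)"]) auto
  have "f summable_on A" using sm summable_on_subset by blast
  hence "(f has_sum infsum f A) A" using summable_iff_has_sum_infsum by blast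
  hence h1: "((\<lambda>t. f (b + int L + int t)) has_sum infsum f A) UNIV"
    using has_sum_reindex_bij_betw[OF bij] by blast
  have "infsum f A \<le> \<rho>^L / (1-\<rho>)"
  proof (rule has_sum_mono[OF h1 geom_has_sum[OF r]])
    fix t :: nat
    have "f (b + int L + int t) = f (b + int (L + t))" by (simp add: add.assoc)
    also have "\<dots> \<le> \<rho>^(L+t)" by (rule pw)
    finally show "f (b + int L + int t) \<le> \<rho>^L * \<rho>^t" by (simp add: power_add)
  qed
  thus ?thesis unfolding A_def .
qed

lemma geom_tail_down:
  fixes f :: "int \<Rightarrow> real"
  assumes nn: "\<And>i. 0 \<le> f i" and le1: "\<And>i. f i \<le> 1" and r: "0 \<le> \<rho>" "\<rho> < 1"
    and step: "\<And>i. i \<le> b \<Longrightarrow> f (i - 1) \<le> \<rho> * f i" and sm: "f summable_on UNIV"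
  shows "infsum f {..b - int L} \<le> \<rho>^L / (1-\<rho>)"
proof -
  define g where "g = (\<lambda>i. f (- i))"
  have bij: "bij_betw uminus (UNIV::int set) UNIV" by (rule bij_betwI[where g=uminus]) auto
  have sg: "g summable_on UNIV" unfolding g_def using summable_on_reindex_bij_betw[OF bij] sm by blast
  have "infsum g {- b + int L..} \<le> \<rho>^L / (1-\<rho>)"
  proof (rule geom_tail_up[OF _ _ r _ sg])
    fix i :: int assume "i \<ge> - b"
    hence "-i \<le> b" by simp
    from step[OF this] have "f (-i - 1) \<le> \<rho> * f (-i)" .
    moreover have "-(i+1) = -i - 1" by simp
    ultimately show "g (i+1) \<le> \<rho> * g i" unfolding g_def by metis
  qed (use nn le1 in \<open>auto simp: g_def\<close>)
  moreover have "infsum g {- b + int L..} = infsum f {..b - int L}"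
  proof -
    have b2: "bij_betw uminus {- b + int L..} {..b - int L}"
      by (rule bij_betwI[where g=uminus]) auto
    show ?thesis unfolding g_def using infsum_reindex_bij_betw[OF b2, of f] by simp
  qed
  ultimately show ?thesis by simp
qed

lemma block_bound:
  fixes q :: "int \<Rightarrow> real" and g :: "nat \<Rightarrow> int"
  assumes nn: "\<And>i. 0 \<le> q i" and hs: "(q has_sum 1) UNIV" and inj: "inj g" and M: "M > 0"
    and blk: "\<And>t. t < M \<Longrightarrow> q k / 2 \<le> q (g t)"
  shows "q k \<le> 2 / real M"
proof -
  have "real M * (q k / 2) = (\<Sum>t<M. q k / 2)" by simp
  also have "\<dots> \<le> (\<Sum>t<M. q (g t))" by (rule sum_mono) (use blk in auto)
  also have "\<dots> = sum q (g ` {..<M})" using inj by (simp add: sum.reindex inj_on_def inj_def)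
  also have "\<dots> \<le> infsum q UNIV"
    by (rule finite_sum_le_infsum) (use hs nn in \<open>auto simp: has_sum_iff\<close>)
  also have "\<dots> = 1" using hs infsumI by blast
  finally have "real M * (q k / 2) \<le> 1" .
  thus ?thesis using M by (simp add: field_simps)
qed


definition ones :: "int list \<Rightarrow> nat" where "ones s = length (filter (\<lambda>x. x = 1) s)"

definition cwG :: "real \<Rightarrow> real \<Rightarrow> nat \<Rightarrow> real \<Rightarrow> real" where
  "cwG \<beta> h n j = \<beta> / real n * (((2*j - real n)^2 - real n) / 2) + h * (2*j - real n)"

definition cww :: "real \<Rightarrow> real \<Rightarrow> nat \<Rightarrow> int \<Rightarrow> real" where
  "cww \<beta> h n j = (if 0 \<le> j then real (n choose nat j) * exp (cwG \<beta> h n (real_of_int j)) else 0)"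

lemma sum_list_pm1: "set s \<subseteq> {-1,1} \<Longrightarrow> sum_list s = 2 * int (ones s) - int (length s)"
  unfolding ones_def by (induction s) auto

lemma double_sum_pm1:
  fixes s :: "int list"
  assumes "s \<in> cw_configs n"
  shows "(\<Sum>i<n. \<Sum>j<n. if i < j then real_of_int (s ! i * s ! j) else 0)
         = ((real_of_int (sum_list s))^2 - real n) / 2"
proof -
  define a where "a = (\<lambda>i. real_of_int (s ! i))"
  have len: "length s = n" and st: "set s \<subseteq> {-1,1}" using assms by (auto simp: cw_configs_def)
  have sq: "a i * a i = 1" if "i < n" for i
  proof -
    have "s ! i \<in> {-1,1}" using st that len nth_mem by blast
    thus ?thesis unfolding a_def by auto
  qed
  define D where "D = (\<Sum>i<n. \<Sum>j<n. if i < j then a i * a j else 0)"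
  have sl: "real_of_int (sum_list s) = (\<Sum>i<n. a i)"
    unfolding a_def sum_list_sum_nth len by (simp add: atLeast0LessThan)
  have "(\<Sum>i<n. a i)^2 = (\<Sum>i<n. \<Sum>j<n. a i * a j)"
    by (simp add: power2_eq_square sum_product)
  also have "\<dots> = (\<Sum>i<n. \<Sum>j<n. (if i < j then a i * a j else 0) + (if j < i then a i * a j else 0)
                    + (if i = j then a i * a j else 0))"
    by (intro sum.cong refl) auto
  also have "\<dots> = D + (\<Sum>i<n. \<Sum>j<n. if j < i then a i * a j else 0) + (\<Sum>i<n. \<Sum>j<n. if i = j then a i * a j else 0)"
    unfolding D_def by (simp add: sum.distrib)
  also have "(\<Sum>i<n. \<Sum>j<n. if j < i then a i * a j else 0) = D"
    unfolding D_def by (subst sum.swap, intro sum.cong refl) (simp add: mult.commute)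
  also have "(\<Sum>i<n. \<Sum>j<n. if i = j then a i * a j else 0) = real n"
    using sq by (simp add: if_distrib sum.delta)
  finally have "(\<Sum>i<n. a i)^2 = 2 * D + real n" by simp
  moreover have "(\<Sum>i<n. \<Sum>j<n. if i < j then real_of_int (s ! i * s ! j) else 0) = D"
    unfolding D_def a_def by (intro sum.cong refl) (simp add: of_int_mult)
  ultimately show ?thesis unfolding sl by simp
qed

lemma cw_weight_alt:
  assumes "s \<in> cw_configs n"
  shows "cw_weight \<beta> h n s = exp (cwG \<beta> h n (real (ones s)))"
proof -
  have len: "length s = n" and st: "set s \<subseteq> {-1,1}" using assms by (auto simp: cw_configs_def)
  have W: "real_of_int (sum_list s) = 2 * real (ones s) - real n"
    using sum_list_pm1[OF st] len by simp
  have S: "(\<Sum>i<n. real_of_int (s ! i)) = real_of_int (sum_list s)"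
    unfolding sum_list_sum_nth len by (simp add: atLeast0LessThan)
  show ?thesis unfolding cw_weight_def cwG_def double_sum_pm1[OF assms] S W ..
qed

lemma cw_delta_eq: "cw_delta n = int (n mod 2)"
  unfolding cw_delta_def by (cases "even n") (auto simp: odd_iff_mod_2_eq_one)

lemma cw_index:
  assumes "s \<in> cw_configs n"
  shows "(cw_W s + cw_delta n) div 2 = int (ones s) - int (n div 2)"
proof -
  have len: "length s = n" and st: "set s \<subseteq> {-1,1}" using assms by (auto simp: cw_configs_def)
  have "cw_W s + cw_delta n = 2 * (int (ones s) - int (n div 2))"
  proof -
    have e: "int n = int (n div 2) * 2 + int (n mod 2)" using div_mult_mod_eq[of n 2]
      by (metis of_nat_add of_nat_mult of_nat_numeral)
    show ?thesis unfolding cw_W_def cw_delta_eq sum_list_pm1[OF st] len by presburger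
  qed
  thus ?thesis by simp
qed

lemma fiber_card:
  "card {s \<in> cw_configs n. ones s = j} = n choose j"
proof -
  define F where "F = (\<lambda>s::int list. {i. i < n \<and> s ! i = 1})"
  define G where "G = (\<lambda>A. map (\<lambda>i. if i \<in> A then (1::int) else -1) [0..<n])"
  have "bij_betw F {s \<in> cw_configs n. ones s = j} {A. A \<subseteq> {..<n} \<and> card A = j}"
  proof (rule bij_betw_byWitness[where f'=G])
    show "\<forall>s\<in>{s \<in> cw_configs n. ones s = j}. G (F s) = s"
    proof
      fix s assume s: "s \<in> {s \<in> cw_configs n. ones s = j}"
      hence len: "length s = n" and st: "set s \<subseteq> {-1,1}" by (auto simp: cw_configs_def)
      show "G (F s) = s"
      proof (rule nth_equalityI)
        show "length (G (F s)) = length s" using len by (simp add: G_def)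
        fix i assume "i < length (G (F s))"
        hence i: "i < n" by (simp add: G_def)
        have "s ! i \<in> {-1,1}" using st i len nth_mem by blast
        thus "G (F s) ! i = s ! i" using i by (auto simp: G_def F_def)
      qed
    qed
    show "\<forall>A\<in>{A. A \<subseteq> {..<n} \<and> card A = j}. F (G A) = A"
      by (auto simp: F_def G_def split: if_splits)
    show "F ` {s \<in> cw_configs n. ones s = j} \<subseteq> {A. A \<subseteq> {..<n} \<and> card A = j}"
    proof safe
      fix s assume "s \<in> cw_configs n" "j = ones s"
      hence len: "length s = n" by (auto simp: cw_configs_def)
      show "card (F s) = ones s" unfolding F_def ones_def length_filter_conv_card len ..
    qed (auto simp: F_def)
    show "G ` {A. A \<subseteq> {..<n} \<and> card A = j} \<subseteq> {s \<in> cw_configs n. ones s = j}"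
    proof safe
      fix A assume A: "A \<subseteq> {..<n}" "j = card A"
      show "G A \<in> cw_configs n" by (auto simp: G_def cw_configs_def)
      have "ones (G A) = card {i. i < n \<and> (G A) ! i = 1}"
        unfolding ones_def length_filter_conv_card by (simp add: G_def)
      also have "{i. i < n \<and> (G A) ! i = 1} = A" using A by (auto simp: G_def split: if_splits)
      finally show "ones (G A) = card A" .
    qed
  qed
  hence "card {s \<in> cw_configs n. ones s = j} = card {A. A \<subseteq> {..<n} \<and> card A = j}"
    by (rule bij_betw_same_card)
  also have "\<dots> = n choose j" using n_subsets[of "{..<n}" j] by simp
  finally show ?thesis .
qed

lemma cw_configs_finite: "finite (cw_configs n)"
proof -
  have "cw_configs n \<subseteq> {xs. set xs \<subseteq> {-1,1} \<and> length xs = n}" by (auto simp: cw_configs_def)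
  moreover have "finite {xs. set xs \<subseteq> ({-1,1}::int set) \<and> length xs = n}"
    by (rule finite_lists_length_eq) simp
  ultimately show ?thesis by (rule finite_subset)
qed

lemma cw_Z_pos: "cw_Z \<beta> h n > 0"
proof -
  have "replicate n 1 \<in> cw_configs n" by (auto simp: cw_configs_def)
  hence "cw_configs n \<noteq> {}" by blast
  thus ?thesis unfolding cw_Z_def cw_weight_def
    by (intro sum_pos cw_configs_finite) auto
qed

lemma cw_pmf_alt:
  "cw_pmf \<beta> h n k = cww \<beta> h n (k + int (n div 2)) / cw_Z \<beta> h n"
proof -
  define j where "j = k + int (n div 2)"
  have set_eq: "{s \<in> cw_configs n. (cw_W s + cw_delta n) div 2 = k} = {s \<in> cw_configs n. int (ones s) = j}"
    using cw_index unfolding j_def by auto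
  have "(\<Sum>s\<in>{s \<in> cw_configs n. int (ones s) = j}. cw_weight \<beta> h n s) = cww \<beta> h n j"
  proof (cases "0 \<le> j")
    case True
    have e: "{s \<in> cw_configs n. int (ones s) = j} = {s \<in> cw_configs n. ones s = nat j}" using True by auto
    have "(\<Sum>s\<in>{s \<in> cw_configs n. ones s = nat j}. cw_weight \<beta> h n s)
          = (\<Sum>s\<in>{s \<in> cw_configs n. ones s = nat j}. exp (cwG \<beta> h n (real_of_int j)))"
      by (intro sum.cong refl) (use True in \<open>auto simp: cw_weight_alt\<close>)
    also have "\<dots> = real (n choose nat j) * exp (cwG \<beta> h n (real_of_int j))"
      by (simp add: fiber_card)
    finally show ?thesis unfolding e cww_def using True by simp
  next
    case False
    hence "{s \<in> cw_configs n. int (ones s) = j} = {}" by auto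
    thus ?thesis using False unfolding cww_def by simp
  qed
  thus ?thesis unfolding cw_pmf_def set_eq j_def by simp
qed

lemma cww_nonneg: "cww \<beta> h n j \<ge> 0"
  unfolding cww_def by auto

lemma cw_nonneg: "cw_pmf \<beta> h n k \<ge> 0"
  unfolding cw_pmf_alt using cww_nonneg[of \<beta> h n] cw_Z_pos[of \<beta> h n] by simp

lemma cww_pos: "0 \<le> j \<Longrightarrow> j \<le> int n \<Longrightarrow> cww \<beta> h n j > 0"
  unfolding cww_def by auto

lemma cww_zero: "j < 0 \<or> j > int n \<Longrightarrow> cww \<beta> h n j = 0"
  unfolding cww_def by auto

lemma cw_has_sum: "(cw_pmf \<beta> h n has_sum 1) UNIV"
proof -
  define f where "f = (\<lambda>s. (cw_W s + cw_delta n) div 2)"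
  define K where "K = f ` cw_configs n"
  have finK: "finite K" unfolding K_def using cw_configs_finite by simp
  have "(\<Sum>k\<in>K. cw_pmf \<beta> h n k) = (\<Sum>k\<in>K. \<Sum>s\<in>{s \<in> cw_configs n. f s = k}. cw_weight \<beta> h n s) / cw_Z \<beta> h n"
    unfolding cw_pmf_def f_def by (simp add: sum_divide_distrib)
  also have "(\<Sum>k\<in>K. \<Sum>s\<in>{s \<in> cw_configs n. f s = k}. cw_weight \<beta> h n s) = cw_Z \<beta> h n"
    unfolding cw_Z_def K_def using cw_configs_finite
    by (subst sum.image_gen[symmetric]) auto
  finally have s1: "(\<Sum>k\<in>K. cw_pmf \<beta> h n k) = 1" using cw_Z_pos[of \<beta> h n] by simp
  show ?thesis
  proof (rule has_sum_finite_neutralI[OF finK])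
    fix x assume "x \<in> UNIV - K"
    hence "{s \<in> cw_configs n. (cw_W s + cw_delta n) div 2 = x} = {}"
      unfolding K_def f_def by auto
    thus "cw_pmf \<beta> h n x = 0" unfolding cw_pmf_def by (subst \<open>{s \<in> cw_configs n. (cw_W s + cw_delta n) div 2 = x} = {}\<close>) simp
  qed (use s1 in auto)
qed

lemma cww_ratio:
  assumes "0 \<le> j" "j < int n"
  shows "cww \<beta> h n (j+1) = cww \<beta> h n j * (real_of_int (int n - j) / real_of_int (j + 1))
           * exp (2 * \<beta> * (2 * real_of_int j + 1 - real n) / real n + 2 * h)"
proof -
  define m where "m = nat j"
  have jm: "j = int m" using assms unfolding m_def by simp
  have mn: "m < n" using assms jm by simp
  have bin: "real (n choose Suc m) * real (Suc m) = real (n choose m) * real (n - m)"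
  proof -
    obtain n' where n': "n = Suc n'" using mn by (cases n) auto
    have "Suc m * (Suc n' choose Suc m) = Suc n' * (n' choose m)" by (rule Suc_times_binomial)
    also have "Suc n' * (n' choose m) = (Suc n' - m) * (Suc n' choose m)"
      using binomial_absorb_comp[of "Suc n'" m] by simp
    finally have "(n choose Suc m) * Suc m = (n choose m) * (n - m)" using n' by (simp add: mult.commute)
    thus ?thesis by (metis of_nat_mult)
  qed
  have G: "cwG \<beta> h n (real m + 1) = cwG \<beta> h n (real m) + (2 * \<beta> * (2 * real m + 1 - real n) / real n + 2 * h)"
    using mn unfolding cwG_def by (simp add: power2_eq_square field_simps)
  have e1: "int m + 1 = int (Suc m)" by simp
  have L: "cww \<beta> h n (j+1) = real (n choose Suc m) * exp (cwG \<beta> h n (real m + 1))"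
    unfolding cww_def jm e1 nat_int by (simp add: add.commute)
  have R: "cww \<beta> h n j = real (n choose m) * exp (cwG \<beta> h n (real m))"
    unfolding cww_def jm by simp
  have b2: "real (n choose Suc m) = real (n choose m) * (real n - real m) / (real m + 1)"
    using bin mn by (simp add: field_simps of_nat_diff)
  have r1: "real_of_int (int n - j) = real n - real m" "real_of_int (j + 1) = real m + 1" using jm by auto
  show ?thesis unfolding L R b2 G exp_add r1 using jm by (simp add: field_simps)
qed


definition tpa :: "real \<Rightarrow> real \<Rightarrow> int" where "tpa \<mu> s2 = \<lfloor>\<mu> - s2\<rfloor>"
definition tplam :: "real \<Rightarrow> real \<Rightarrow> real" where "tplam \<mu> s2 = s2 + (\<mu> - s2 - real_of_int (tpa \<mu> s2))"

lemma tp_pmf_alt: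
  "tp_pmf \<mu> s2 k = (if tpa \<mu> s2 \<le> k then exp (- tplam \<mu> s2) * tplam \<mu> s2 ^ nat (k - tpa \<mu> s2)
      / fact (nat (k - tpa \<mu> s2)) else 0)"
  unfolding tp_pmf_def tpa_def tplam_def Let_def by simp

lemma tplam_center: "real_of_int (tpa \<mu> s2) + tplam \<mu> s2 = \<mu>"
  unfolding tplam_def by simp

lemma tplam_bounds: "s2 \<le> tplam \<mu> s2" "tplam \<mu> s2 < s2 + 1"
  unfolding tplam_def tpa_def by linarith+

lemma tp_nonneg: "s2 > 0 \<Longrightarrow> tp_pmf \<mu> s2 k \<ge> 0"
  using tplam_bounds[of s2 \<mu>] unfolding tp_pmf_alt by auto

lemma tp_pos: "s2 > 0 \<Longrightarrow> tpa \<mu> s2 \<le> k \<Longrightarrow> tp_pmf \<mu> s2 k > 0"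
  using tplam_bounds[of s2 \<mu>] unfolding tp_pmf_alt by auto

lemma tp_ratio:
  assumes "s2 > 0" "tpa \<mu> s2 \<le> k"
  shows "tp_pmf \<mu> s2 (k+1) = tp_pmf \<mu> s2 k * (tplam \<mu> s2 / real_of_int (k - tpa \<mu> s2 + 1))"
proof -
  define m where "m = nat (k - tpa \<mu> s2)"
  have m1: "nat (k + 1 - tpa \<mu> s2) = Suc m" unfolding m_def using assms by simp
  have m2: "real_of_int (k - tpa \<mu> s2 + 1) = real (Suc m)" unfolding m_def using assms by simp
  show ?thesis unfolding tp_pmf_alt using assms m1 m2
    by (simp add: m_def[symmetric] field_simps)
qed

lemma tp_has_sum:
  assumes "s2 > 0"
  shows "(tp_pmf \<mu> s2 has_sum 1) UNIV"
proof -
  define a where "a = tpa \<mu> s2"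
  define l where "l = tplam \<mu> s2"
  have l0: "l > 0" using tplam_bounds[of s2 \<mu>] assms unfolding l_def by simp
  have "(\<lambda>n. l ^ n /\<^sub>R fact n) sums exp l" by (rule exp_converges)
  hence "(\<lambda>n. exp (-l) * (l ^ n / fact n)) sums (exp (-l) * exp l)"
    by (intro sums_mult) (simp add: divide_inverse_commute scaleR_conv_of_real)
  hence "(\<lambda>n. exp (-l) * (l ^ n / fact n)) sums 1" by (simp add: exp_minus exp_not_eq_zero)
  hence hs: "((\<lambda>n. exp (-l) * (l ^ n / fact n)) has_sum 1) UNIV"
    by (rule sums_nonneg_imp_has_sum) (use l0 in simp)
  have inj: "inj_on (\<lambda>n::nat. a + int n) UNIV" by (auto simp: inj_on_def)
  have img: "(\<lambda>n::nat. a + int n) ` UNIV = {a..}"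
  proof (rule set_eqI)
    fix x show "x \<in> range (\<lambda>n. a + int n) \<longleftrightarrow> x \<in> {a..}"
    proof
      assume "x \<in> {a..}" thus "x \<in> range (\<lambda>n. a + int n)"
        by (intro image_eqI[where x="nat (x - a)"]) auto
    qed auto
  qed
  have "(tp_pmf \<mu> s2 has_sum 1) {a..}"
  proof -
    have "((tp_pmf \<mu> s2 \<circ> (\<lambda>n::nat. a + int n)) has_sum 1) UNIV"
      using hs by (rule has_sum_cong[THEN iffD1, rotated])
        (simp add: tp_pmf_alt a_def[symmetric] l_def[symmetric])
    thus ?thesis using has_sum_reindex[OF inj] img by metis
  qed
  thus ?thesis
    by (rule has_sum_cong_neutral[THEN iffD1, rotated -1]) (auto simp: tp_pmf_alt a_def)
qed


locale cwsetup =
  fixes \<beta> h m0 :: real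
  assumes beta0: "0 < \<beta>" and beta1: "\<beta> < 1" and mfix: "m0 = tanh (\<beta> * m0 + h)"
begin

definition "v = 1 - m0^2"
definition "\<kappa> = 4 * (1 - \<beta> * v) / v"
definition "p0 = (1 + m0) / 2"
definition "K1 = 2 * \<kappa> + 2 + 1 / p0"
definition "K2 = 3 * \<kappa>^2 + 2 / (1 - p0)^2 + 2 / p0^2"
definition "\<mu> n = real n * m0 / 2"
definition "s2 n = real n * (1 - m0\<^sup>2) / (4 * (1 - \<beta> + \<beta> * m0\<^sup>2))"
definition "LR n (j::real) = ln (real n - j) - ln (j + 1) + 2 * \<beta> * (2 * j + 1 - real n) / real n + 2 * h"
definition "dd n = real (n div 2) - real n / 2"

lemma m0_bounds: "-1 < m0" "m0 < 1"
  using mfix tanh_real_lt_1 tanh_real_gt_neg1 by metis+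

lemma v_pos: "0 < v" "v \<le> 1"
proof -
  have "m0^2 < 1" using m0_bounds by (simp add: abs_square_less_1)
  thus "0 < v" "v \<le> 1" unfolding v_def by auto
qed

lemma kappa_pos: "\<kappa> > 0"
proof -
  have "\<beta> * v \<le> \<beta> * 1" using v_pos beta0 by (intro mult_left_mono) auto
  hence "\<beta> * v < 1" using beta1 by simp
  thus ?thesis unfolding \<kappa>_def using v_pos by simp
qed

lemma p0_bounds: "0 < p0" "p0 < 1"
  unfolding p0_def using m0_bounds by auto

lemma K_pos: "K1 > 0" "K2 > 0"
  unfolding K1_def K2_def using kappa_pos p0_bounds by (auto intro!: add_pos_nonneg add_nonneg_nonneg)

lemma s2_eq: "s2 n = real n / \<kappa>"
proof -
  have "1 - \<beta> + \<beta> * m0\<^sup>2 = 1 - \<beta> * v" unfolding v_def by (simp add: algebra_simps)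
  moreover have "1 - \<beta> * v > 0" using kappa_pos v_pos unfolding \<kappa>_def by (simp add: field_simps)
  ultimately show ?thesis unfolding s2_def \<kappa>_def v_def[symmetric] using v_pos by (simp add: field_simps)
qed

lemma inv_p0_sum: "1 / (1 - p0) + 1 / p0 = \<kappa> + 4 * \<beta>"
proof -
  have a: "1 / (1 - p0) + 1 / p0 = 4 / v"
    unfolding p0_def v_def using m0_bounds by (simp add: field_simps power2_eq_square) 
  moreover have "\<kappa> = 4 / v - 4 * \<beta>" unfolding \<kappa>_def using v_pos by (simp add: field_simps)
  ultimately show ?thesis by simp
qed

lemma log_odds: "ln (1 - p0) - ln p0 = - 2 * (\<beta> * m0 + h)"
proof -
  define z where "z = \<beta> * m0 + h"
  define e where "e = exp (- 2 * z)"
  have e0: "e > 0" unfolding e_def by simp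
  have m: "m0 = (1 - e) / (1 + e)" using mfix tanh_real_altdef unfolding z_def e_def by metis
  have "1 - p0 = e / (1 + e)" unfolding p0_def using m e0 by (simp add: field_simps)
  moreover have "p0 = 1 / (1 + e)" unfolding p0_def using m e0 by (simp add: field_simps)
  ultimately have "ln (1 - p0) - ln p0 = ln e"
    using e0 by (simp add: ln_div)
  thus ?thesis unfolding e_def z_def by simp
qed

end


context cwsetup begin

definition "P n k = cw_pmf \<beta> h n k"
definition "Q n k = tp_pmf (\<mu> n) (s2 n) k"
definition "jj n k = k + int (n div 2)"
definition "lam n = tplam (\<mu> n) (s2 n)"
definition "aa n = tpa (\<mu> n) (s2 n)"

lemma s2_pos: "n \<ge> 1 \<Longrightarrow> s2 n > 0"
  unfolding s2_eq using kappa_pos by simp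

lemma lam_bounds: "real n / \<kappa> \<le> lam n" "lam n < real n / \<kappa> + 1"
  unfolding lam_def using tplam_bounds(1)[of "s2 n" "\<mu> n"] tplam_bounds(2)[of "\<mu> n" "s2 n"] s2_eq by auto

lemma aa_lam: "real_of_int (aa n) + lam n = \<mu> n"
  unfolding aa_def lam_def by (rule tplam_center)

lemma dd_bounds: "-1/2 \<le> dd n" "dd n \<le> 0"
  unfolding dd_def by (cases "even n"; auto elim!: evenE oddE simp: field_simps)+

lemma jj_real: "real_of_int (jj n k) = real n * p0 + (real_of_int k - \<mu> n) + dd n"
  unfolding jj_def dd_def \<mu>_def p0_def by (simp add: field_simps)

lemma P_step:
  assumes "0 \<le> jj n k" "jj n k < int n"
  shows "P n (k+1) = P n k * exp (LR n (real_of_int (jj n k)))"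
proof -
  define j where "j = jj n k"
  have j1: "jj n (k+1) = j + 1" unfolding j_def jj_def by simp
  have n0: "real n - real_of_int j > 0" "real_of_int j + 1 > 0" using assms unfolding j_def by auto
  have e: "exp (LR n (real_of_int j)) = real_of_int (int n - j) / real_of_int (j + 1)
           * exp (2 * \<beta> * (2 * real_of_int j + 1 - real n) / real n + 2 * h)"
    unfolding LR_def using n0 by (simp add: exp_add exp_diff)
  show ?thesis unfolding P_def cw_pmf_alt jj_def[symmetric] j1 j_def[symmetric]
    using cww_ratio[of j n \<beta> h] assms unfolding j_def[symmetric] e by (simp add: ac_simps)
qed

lemma P_pos: "0 \<le> jj n k \<Longrightarrow> jj n k \<le> int n \<Longrightarrow> P n k > 0"
  unfolding P_def cw_pmf_alt jj_def using cww_pos cw_Z_pos by simp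

lemma P_zero: "jj n k < 0 \<or> jj n k > int n \<Longrightarrow> P n k = 0"
  unfolding P_def cw_pmf_alt jj_def using cww_zero by simp

lemma LR_approx:
  fixes n :: nat and k :: int and U :: real
  assumes n1: "n \<ge> 1" and U1: "U \<ge> 1" and yU: "\<bar>real_of_int k - \<mu> n\<bar> + 2 \<le> U"
    and Up: "U \<le> real n * p0 / 2" "U \<le> real n * (1 - p0) / 2"
  shows "0 \<le> jj n k" "jj n k < int n"
    "\<bar>LR n (real_of_int (jj n k)) - (- (real_of_int k - \<mu> n + dd n) * \<kappa> / real n + (2 * \<beta> - 1 / p0) / real n)\<bar>
       \<le> (2 / (1 - p0)^2 + 2 / p0^2) * U^2 / (real n)^2"
proof -
  define y where "y = real_of_int k - \<mu> n"
  define d where "d = dd n"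
  define j where "j = real_of_int (jj n k)"
  define x1 where "x1 = (y + d) / (real n * (1 - p0))"
  define x2 where "x2 = (y + d + 1) / (real n * p0)"
  have nn: "real n > 0" using n1 by simp
  have p: "0 < p0" "p0 < 1" by (rule p0_bounds)+
  have np: "real n * p0 > 0" "real n * (1 - p0) > 0" using nn p by auto
  have jd: "j = real n * p0 + y + d" unfolding j_def y_def d_def by (rule jj_real)
  have d: "-1/2 \<le> d" "d \<le> 0" unfolding d_def by (rule dd_bounds)+
  have ay: "\<bar>y + d\<bar> \<le> U" "\<bar>y + d + 1\<bar> \<le> U" using yU d unfolding y_def by auto
  have ax1: "\<bar>x1\<bar> \<le> U / (real n * (1 - p0))" unfolding x1_def using ay np
    by (simp add: abs_divide divide_right_mono)
  have ax2: "\<bar>x2\<bar> \<le> U / (real n * p0)" unfolding x2_def using ay np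
    by (simp add: abs_divide divide_right_mono)
  have "U / (real n * (1 - p0)) \<le> 1/2" using Up np by (simp add: field_simps)
  hence "\<bar>x1\<bar> \<le> 1/2" using ax1 by linarith
  hence x1h: "\<bar>-x1\<bar> \<le> 1/2" by simp
  have "U / (real n * p0) \<le> 1/2" using Up np by (simp add: field_simps)
  hence x2h: "\<bar>x2\<bar> \<le> 1/2" using ax2 by linarith
  have nz: "real n * (1 - p0) \<noteq> 0" "real n * p0 \<noteq> 0" using nn p n1 by auto
  have x1e: "real n * (1 - p0) * x1 = y + d" unfolding x1_def times_divide_eq_right
    by (rule nonzero_mult_div_cancel_left[OF nz(1)])
  have x2e: "real n * p0 * x2 = y + d + 1" unfolding x2_def times_divide_eq_right
    by (rule nonzero_mult_div_cancel_left[OF nz(2)])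
  have nj: "real n - j = real n * (1 - p0) * (1 + (-x1))"
  proof -
    have "real n * (1 - p0) * (1 + (-x1)) = real n * (1 - p0) - real n * (1 - p0) * x1"
      by (simp add: right_diff_distrib)
    also have "\<dots> = real n * (1 - p0) - (y + d)" using x1e by simp
    also have "\<dots> = real n - j" unfolding jd by (simp add: algebra_simps)
    finally show ?thesis by simp
  qed
  have j1: "j + 1 = real n * p0 * (1 + x2)"
  proof -
    have "real n * p0 * (1 + x2) = real n * p0 + real n * p0 * x2"
      by (simp add: distrib_left)
    also have "\<dots> = real n * p0 + (y + d + 1)" using x2e by simp
    also have "\<dots> = j + 1" unfolding jd by (simp add: algebra_simps)
    finally show ?thesis by simp
  qed
  have pos1: "1 + (-x1) > 0" "1 + x2 > 0" using x1h x2h by auto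
  show "0 \<le> jj n k"
  proof -
    have "j + 1 > 0" unfolding j1 using np pos1 by simp
    hence "real_of_int (jj n k) > -1" unfolding j_def by simp
    thus ?thesis by simp
  qed
  show "jj n k < int n"
  proof -
    have "real n - j > 0" unfolding nj using np pos1 by simp
    thus ?thesis unfolding j_def by simp
  qed
  have lnj: "ln (real n - j) = ln (real n) + ln (1 - p0) + ln (1 + (-x1))"
    unfolding nj using nn p pos1 by (simp add: ln_mult)
  have lnj1: "ln (j + 1) = ln (real n) + ln p0 + ln (1 + x2)"
    unfolding j1 using nn p pos1 by (simp add: ln_mult)
  define e1 where "e1 = ln (1 + (-x1)) - (-x1)"
  define e2 where "e2 = ln (1 + x2) - x2"
  have e1b: "\<bar>e1\<bar> \<le> 2 * x1^2" unfolding e1_def using abs_ln_one_plus_x_minus_x_bound[OF x1h] by simp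
  have e2b: "\<bar>e2\<bar> \<le> 2 * x2^2" unfolding e2_def using abs_ln_one_plus_x_minus_x_bound[OF x2h] .
  have lin: "2 * \<beta> * (2 * j + 1 - real n) / real n = 2 * \<beta> * m0 + (4 * \<beta> * (y + d) + 2 * \<beta>) / real n"
    unfolding jd p0_def using nn by (simp add: field_simps)
  have sx: "- x1 - x2 = - (y + d) * (\<kappa> + 4 * \<beta>) / real n - 1 / (real n * p0)"
  proof -
    have "- x1 - x2 = - (y + d) * (1 / (1 - p0) + 1 / p0) / real n - 1 / (real n * p0)"
      unfolding x1_def x2_def using np p nn by (simp add: field_simps)
    thus ?thesis unfolding inv_p0_sum .
  qed
  have LRe: "LR n j = - (y + d) * \<kappa> / real n + (2 * \<beta> - 1 / p0) / real n + e1 - e2"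
  proof -
    have "LR n j = (ln (1 - p0) - ln p0) + (-x1 - x2) + 2 * \<beta> * (2 * j + 1 - real n) / real n + 2 * h + e1 - e2"
      unfolding LR_def lnj lnj1 e1_def e2_def by simp
    also have "\<dots> = - (y + d) * \<kappa> / real n + (2 * \<beta> - 1 / p0) / real n + e1 - e2"
      unfolding log_odds sx lin using nn by (simp add: field_simps)
    finally show ?thesis .
  qed
  have x1s: "x1^2 \<le> U^2 / (real n)^2 * (1 / (1 - p0)^2)"
  proof -
    have "x1^2 = \<bar>x1\<bar>^2" by simp
    also have "\<dots> \<le> (U / (real n * (1 - p0)))^2" by (rule power_mono[OF ax1]) simp
    finally show ?thesis by (simp add: power_divide power_mult_distrib)
  qed
  have x2s: "x2^2 \<le> U^2 / (real n)^2 * (1 / p0^2)"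
  proof -
    have "x2^2 = \<bar>x2\<bar>^2" by simp
    also have "\<dots> \<le> (U / (real n * p0))^2" by (rule power_mono[OF ax2]) simp
    finally show ?thesis by (simp add: power_divide power_mult_distrib)
  qed
  have "\<bar>LR n j - (- (y + d) * \<kappa> / real n + (2 * \<beta> - 1 / p0) / real n)\<bar> \<le> 2 * x1^2 + 2 * x2^2"
    unfolding LRe using e1b e2b by linarith
  also have "\<dots> \<le> (2 / (1 - p0)^2 + 2 / p0^2) * U^2 / (real n)^2"
  proof -
    have eq: "(2 / (1 - p0)^2 + 2 / p0^2) * U^2 / (real n)^2
       = 2 * (U^2 / (real n)^2 * (1 / (1 - p0)^2)) + 2 * (U^2 / (real n)^2 * (1 / p0^2))"
      by (simp add: algebra_simps add_divide_distrib)
    show ?thesis unfolding eq using x1s x2s by linarith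
  qed
  finally show "\<bar>LR n (real_of_int (jj n k)) - (- (real_of_int k - \<mu> n + dd n) * \<kappa> / real n + (2 * \<beta> - 1 / p0) / real n)\<bar>
       \<le> (2 / (1 - p0)^2 + 2 / p0^2) * U^2 / (real n)^2"
    unfolding j_def y_def d_def .
qed

end


context cwsetup begin

lemma Q_step:
  fixes n :: nat and k :: int and U :: real
  assumes n1: "n \<ge> 1" and U1: "U \<ge> 1" and yU: "\<bar>real_of_int k - \<mu> n\<bar> + 2 \<le> U"
    and Uk: "U \<le> real n / (2 * \<kappa>)"
  shows "aa n \<le> k"
    "\<bar>ln (Q n (k+1)) - ln (Q n k) + (real_of_int k - \<mu> n + 1) / lam n\<bar> \<le> 2 * \<kappa>^2 * U^2 / (real n)^2"
proof -
  define y where "y = real_of_int k - \<mu> n"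
  define x3 where "x3 = (y + 1) / lam n"
  have nn: "real n > 0" using n1 by simp
  have kp: "\<kappa> > 0" by (rule kappa_pos)
  have lb: "real n / \<kappa> \<le> lam n" by (rule lam_bounds)
  have l0: "lam n > 0" using lb nn kp by (meson divide_pos_pos less_le_trans)
  have ay: "\<bar>y + 1\<bar> \<le> U" using yU unfolding y_def by auto
  have ax3: "\<bar>x3\<bar> \<le> U / lam n" unfolding x3_def using ay l0 by (simp add: abs_divide divide_right_mono)
  have pos: "0 < lam n * real n / \<kappa>" using l0 nn kp by simp
  have "U / lam n \<le> U / (real n / \<kappa>)" using U1 lb nn kp pos by (intro divide_left_mono) auto
  also have "\<dots> = U * \<kappa> / real n" by simp
  finally have ax3': "\<bar>x3\<bar> \<le> U * \<kappa> / real n" using ax3 by linarith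
  have "U * \<kappa> / real n \<le> 1/2" using Uk nn kp by (simp add: field_simps)
  hence x3h: "\<bar>x3\<bar> \<le> 1/2" using ax3' by linarith
  have x3e: "lam n * x3 = y + 1" unfolding x3_def using l0 by simp
  have ka: "real_of_int (k - aa n + 1) = lam n * (1 + x3)"
  proof -
    have "real_of_int (k - aa n + 1) = real_of_int k - real_of_int (aa n) + 1" by simp
    also have "\<dots> = lam n + y + 1" unfolding y_def using aa_lam[of n] by linarith
    also have "\<dots> = lam n * (1 + x3)" using x3e by (simp add: distrib_left)
    finally show ?thesis .
  qed
  have px: "1 + x3 > 0" using x3h by auto
  have "real_of_int (k - aa n + 1) > 0" unfolding ka using l0 px by simp
  thus ak: "aa n \<le> k" by simp
  have s2p: "s2 n > 0" using s2_pos n1 by simp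
  have Qk: "Q n k > 0" unfolding Q_def using tp_pos[OF s2p] ak unfolding aa_def by simp
  have Qr: "Q n (k+1) = Q n k * (lam n / real_of_int (k - aa n + 1))"
    unfolding Q_def lam_def aa_def using tp_ratio[OF s2p] ak unfolding aa_def by simp
  have rp: "lam n / real_of_int (k - aa n + 1) > 0"
    using l0 \<open>real_of_int (k - aa n + 1) > 0\<close> by simp
  have "ln (Q n (k+1)) - ln (Q n k) = ln (lam n / real_of_int (k - aa n + 1))"
    unfolding Qr ln_mult_pos[OF Qk rp] by simp
  also have "lam n / real_of_int (k - aa n + 1) = inverse (1 + x3)" unfolding ka using l0 px
    by (simp add: nonzero_divide_mult_cancel_left inverse_eq_divide)
  also have "ln (inverse (1 + x3)) = - ln (1 + x3)" using px by (simp add: ln_inverse)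
  finally have lq: "ln (Q n (k+1)) - ln (Q n k) = - ln (1 + x3)" .
  have "\<bar>ln (1 + x3) - x3\<bar> \<le> 2 * x3^2" by (rule abs_ln_one_plus_x_minus_x_bound[OF x3h])
  moreover have "x3^2 \<le> (U * \<kappa> / real n)^2"
  proof -
    have "x3^2 = \<bar>x3\<bar>^2" by simp
    also have "\<dots> \<le> (U * \<kappa> / real n)^2" by (rule power_mono[OF ax3']) simp
    finally show ?thesis .
  qed
  ultimately have "\<bar>ln (1 + x3) - x3\<bar> \<le> 2 * (U * \<kappa> / real n)^2" by linarith
  moreover have "(real_of_int k - \<mu> n + 1) / lam n = x3" unfolding x3_def y_def ..
  ultimately show "\<bar>ln (Q n (k+1)) - ln (Q n k) + (real_of_int k - \<mu> n + 1) / lam n\<bar> \<le> 2 * \<kappa>^2 * U^2 / (real n)^2"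
    unfolding lq by (simp add: power_mult_distrib power_divide abs_minus_commute algebra_simps)
qed

lemma step_diff:
  fixes n :: nat and k :: int and U :: real
  assumes n1: "n \<ge> 1" and U1: "U \<ge> 1" and yU: "\<bar>real_of_int k - \<mu> n\<bar> + 2 \<le> U"
    and Up: "U \<le> real n * p0 / 2" "U \<le> real n * (1 - p0) / 2"
    and Uk: "U \<le> real n / (2 * \<kappa>)"
  shows "P n k > 0" "Q n k > 0" "P n (k+1) > 0" "Q n (k+1) > 0"
    "\<bar>(ln (P n (k+1)) - ln (Q n (k+1))) - (ln (P n k) - ln (Q n k))\<bar> \<le> K1 / real n + K2 * U^2 / (real n)^2"
proof -
  note LA = LR_approx[OF n1 U1 yU Up]
  note QS = Q_step[OF n1 U1 yU Uk]
  have s2p: "s2 n > 0" using s2_pos n1 by simp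
  show Pk: "P n k > 0" using P_pos LA(1,2) by simp
  show Qk: "Q n k > 0" unfolding Q_def using tp_pos[OF s2p] QS(1) unfolding aa_def by simp
  have jj1: "jj n (k+1) = jj n k + 1" unfolding jj_def by simp
  show Pk1: "P n (k+1) > 0" using P_pos[of n "k+1"] LA(1,2) unfolding jj1 by simp
  show Qk1: "Q n (k+1) > 0" unfolding Q_def using tp_pos[OF s2p] QS(1) unfolding aa_def by simp
  define y where "y = real_of_int k - \<mu> n"
  define d where "d = dd n"
  define l where "l = lam n"
  define E1 where "E1 = LR n (real_of_int (jj n k)) - (- (y + d) * \<kappa> / real n + (2 * \<beta> - 1 / p0) / real n)"
  define E3 where "E3 = ln (Q n (k+1)) - ln (Q n k) + (y + 1) / l"
  have nn: "real n > 0" using n1 by simp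
  have kp: "\<kappa> > 0" by (rule kappa_pos)
  have p: "0 < p0" "p0 < 1" by (rule p0_bounds)+
  have lb: "real n / \<kappa> \<le> l" "l < real n / \<kappa> + 1" unfolding l_def by (rule lam_bounds)+
  have l0: "l > 0" using lb nn kp by (meson divide_pos_pos less_le_trans)
  have E1b: "\<bar>E1\<bar> \<le> (2 / (1 - p0)^2 + 2 / p0^2) * U^2 / (real n)^2"
    unfolding E1_def y_def d_def using LA(3) .
  have E3b: "\<bar>E3\<bar> \<le> 2 * \<kappa>^2 * U^2 / (real n)^2"
    unfolding E3_def y_def l_def using QS(2) .
  have lnP: "ln (P n (k+1)) - ln (P n k) = LR n (real_of_int (jj n k))"
    unfolding P_step[OF LA(1,2)] using Pk by (simp add: ln_mult)
  have D: "(ln (P n (k+1)) - ln (Q n (k+1))) - (ln (P n k) - ln (Q n k))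
     = y * (1 / l - \<kappa> / real n) + 1 / l - d * \<kappa> / real n + (2 * \<beta> - 1 / p0) / real n + E1 - E3"
  proof -
    have "(ln (P n (k+1)) - ln (Q n (k+1))) - (ln (P n k) - ln (Q n k))
        = (ln (P n (k+1)) - ln (P n k)) - (ln (Q n (k+1)) - ln (Q n k))" by simp
    also have "\<dots> = (- (y + d) * \<kappa> / real n + (2 * \<beta> - 1 / p0) / real n + E1) - (E3 - (y + 1) / l)"
      unfolding lnP E1_def E3_def by simp
    also have "\<dots> = y * (1 / l - \<kappa> / real n) + 1 / l - d * \<kappa> / real n + (2 * \<beta> - 1 / p0) / real n + E1 - E3"
      using nn l0 by (simp add: field_simps)
    finally show ?thesis .
  qed
  have il1: "1 / l \<le> \<kappa> / real n" using lb(1) nn kp l0 by (simp add: field_simps)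
  have il2: "\<kappa> / real n - \<kappa>^2 / (real n)^2 \<le> 1 / l"
  proof -
    have "1 / (real n / \<kappa> + 1) \<le> 1 / l" using lb(2) l0 by (intro divide_left_mono) auto
    moreover have "1 / (real n / \<kappa> + 1) = \<kappa> / (real n + \<kappa>)" using kp by (simp add: field_simps)
    moreover have "\<kappa> / real n - \<kappa>^2 / (real n)^2 \<le> \<kappa> / (real n + \<kappa>)"
    proof -
      have "\<kappa> / real n - \<kappa>^2 / (real n)^2 = \<kappa> * (real n - \<kappa>) / (real n)^2"
        using nn by (simp add: field_simps power2_eq_square)
      also have "\<dots> \<le> \<kappa> / (real n + \<kappa>)"
      proof -
        have "(real n - \<kappa>) * (real n + \<kappa>) \<le> (real n)^2" by (simp add: power2_eq_square algebra_simps)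
        hence "\<kappa> * ((real n - \<kappa>) * (real n + \<kappa>)) \<le> \<kappa> * (real n)^2" using kp by simp
        thus ?thesis using nn kp by (simp add: field_simps)
      qed
      finally show ?thesis .
    qed
    ultimately show ?thesis by linarith
  qed
  have yb: "\<bar>y\<bar> \<le> U" using yU unfolding y_def by linarith
  have T1: "\<bar>y * (1 / l - \<kappa> / real n)\<bar> \<le> \<kappa>^2 * U^2 / (real n)^2"
  proof -
    have "\<bar>1 / l - \<kappa> / real n\<bar> \<le> \<kappa>^2 / (real n)^2" using il1 il2 by linarith
    hence "\<bar>y * (1 / l - \<kappa> / real n)\<bar> \<le> U * (\<kappa>^2 / (real n)^2)"
      unfolding abs_mult by (rule mult_mono[OF yb]) (use U1 in auto)
    also have "\<dots> \<le> U^2 * (\<kappa>^2 / (real n)^2)"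
      by (rule mult_right_mono) (use U1 in \<open>auto simp: power2_eq_square\<close>)
    finally show ?thesis by (simp add: ac_simps)
  qed
  have T2: "0 \<le> 1 / l" "1 / l \<le> \<kappa> / real n" using l0 il1 by auto
  have T3: "\<bar>d * \<kappa> / real n\<bar> \<le> \<kappa> / 2 / real n"
  proof -
    have "\<bar>d\<bar> \<le> 1/2" using dd_bounds[of n] unfolding d_def by linarith
    hence "\<bar>d\<bar> * \<kappa> \<le> 1/2 * \<kappa>" using kp by (intro mult_right_mono) auto
    hence "\<bar>d\<bar> * \<kappa> / real n \<le> (1/2 * \<kappa>) / real n" using nn by (intro divide_right_mono) auto
    moreover have "\<bar>d * \<kappa> / real n\<bar> = \<bar>d\<bar> * \<kappa> / real n" using nn kp by (simp add: abs_mult abs_divide)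
    ultimately show ?thesis by (simp only:) simp
  qed
  have T4: "\<bar>(2 * \<beta> - 1 / p0) / real n\<bar> \<le> (2 + 1 / p0) / real n"
  proof -
    have ip: "0 < 1 / p0" using p by simp
    have "\<bar>2 * \<beta> - 1 / p0\<bar> \<le> 2 + 1 / p0" unfolding abs_le_iff using beta0 beta1 ip by linarith
    thus ?thesis using nn by (simp add: abs_divide divide_right_mono)
  qed
  have S1: "K1 / real n = \<kappa> / real n + \<kappa> / 2 / real n + (2 + 1 / p0) / real n + \<kappa> / 2 / real n"
    unfolding K1_def using nn by (simp add: field_simps)
  have S2: "K2 * U^2 / (real n)^2 = \<kappa>^2 * U^2 / (real n)^2 + (2 / (1 - p0)^2 + 2 / p0^2) * U^2 / (real n)^2
      + 2 * \<kappa>^2 * U^2 / (real n)^2"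
    unfolding K2_def using nn by (simp add: field_simps)
  have S3: "0 \<le> \<kappa> / 2 / real n" using kp nn by simp
  show "\<bar>(ln (P n (k+1)) - ln (Q n (k+1))) - (ln (P n k) - ln (Q n k))\<bar> \<le> K1 / real n + K2 * U^2 / (real n)^2"
    unfolding D S1 S2
    using abs_le_D1[OF T1] abs_le_D2[OF T1] T2 abs_le_D1[OF T3] abs_le_D2[OF T3]
      abs_le_D1[OF T4] abs_le_D2[OF T4] abs_le_D1[OF E1b] abs_le_D2[OF E1b]
      abs_le_D1[OF E3b] abs_le_D2[OF E3b] S3
    by (intro abs_leI) linarith+
qed

lemma LR_mono:
  fixes n :: nat and x x' :: real
  assumes n1: "n \<ge> 1" and nb: "\<beta> \<le> real n * (1 - \<beta>)"
    and x: "0 \<le> x" "x \<le> x'" "x' \<le> real n - 1"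
  shows "LR n x' \<le> LR n x"
proof (rule DERIV_nonpos_imp_nonincreasing[OF x(2)])
  fix t assume t: "x \<le> t" "t \<le> x'"
  have nn: "real n > 0" using n1 by simp
  have a: "real n - t > 0" "t + 1 > 0" using t x by auto
  have der: "((\<lambda>j. LR n j) has_real_derivative (- 1 / (real n - t) - 1 / (t + 1) + 4 * \<beta> / real n)) (at t)"
    unfolding LR_def
    by (rule derivative_eq_intros refl | use a nn in simp)+
  have "4 / (real n + 1) \<le> 1 / (real n - t) + 1 / (t + 1)"
  proof -
    have "4 * ((real n - t) * (t + 1)) \<le> (real n + 1) * (real n + 1)"
    proof -
      have "0 \<le> ((real n - t) - (t + 1))^2" by simp
      thus ?thesis by (simp add: power2_eq_square algebra_simps)
    qed
    hence "4 / (real n + 1) \<le> (real n + 1) / ((real n - t) * (t + 1))"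
    proof -
      assume h4: "4 * ((real n - t) * (t + 1)) \<le> (real n + 1) * (real n + 1)"
      define A where "A = (real n - t) * (t + 1)"
      have A0: "A > 0" unfolding A_def using a by simp
      have "(real n + 1) / A - 4 / (real n + 1) = ((real n + 1) * (real n + 1) - 4 * A) / (A * (real n + 1))"
        using A0 nn by (simp add: field_simps)
      also have "\<dots> \<ge> 0" using h4 A0 nn unfolding A_def[symmetric] by (intro divide_nonneg_pos) auto
      finally show ?thesis unfolding A_def by simp
    qed
    also have "\<dots> = 1 / (real n - t) + 1 / (t + 1)" using a by (simp add: field_simps)
    finally show ?thesis .
  qed
  moreover have "4 * \<beta> / real n \<le> 4 / (real n + 1)" using nb nn by (simp add: field_simps)
  ultimately have "- 1 / (real n - t) - 1 / (t + 1) + 4 * \<beta> / real n \<le> 0" by simp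
  thus "\<exists>y. ((\<lambda>j. LR n j) has_real_derivative y) (at t) \<and> y \<le> 0" using der by blast
qed

end


context cwsetup begin

lemma chain:
  fixes n :: nat and T U :: real
  assumes n1: "n \<ge> 1" and T0: "T \<ge> 0" and U1: "U \<ge> 1" and TU: "T + 2 \<le> U"
    and Up: "U \<le> real n * p0 / 2" "U \<le> real n * (1 - p0) / 2"
    and Uk: "U \<le> real n / (2 * \<kappa>)"
    and k: "\<bar>real_of_int k - \<mu> n\<bar> \<le> T"
  shows "P n k > 0" "Q n k > 0"
    "\<bar>ln (P n k) - ln (Q n k) - (ln (P n \<lceil>\<mu> n - T\<rceil>) - ln (Q n \<lceil>\<mu> n - T\<rceil>))\<bar>
       \<le> 2 * T * (K1 / real n + K2 * U^2 / (real n)^2)"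
proof -
  define k0 where "k0 = \<lceil>\<mu> n - T\<rceil>"
  define e where "e = K1 / real n + K2 * U^2 / (real n)^2"
  define g where "g = (\<lambda>i. ln (P n i) - ln (Q n i))"
  have e0: "e \<ge> 0" unfolding e_def using K_pos n1 by simp
  have SD: "\<bar>g (i+1) - g i\<bar> \<le> e" "P n i > 0" "Q n i > 0" if "\<bar>real_of_int i - \<mu> n\<bar> \<le> T" for i
  proof -
    have yU: "\<bar>real_of_int i - \<mu> n\<bar> + 2 \<le> U" using that TU by linarith
    note S = step_diff[OF n1 U1 yU Up Uk]
    show "\<bar>g (i+1) - g i\<bar> \<le> e" unfolding g_def e_def using S(5) by simp
    show "P n i > 0" "Q n i > 0" using S(1,2) by auto
  qed
  show "P n k > 0" "Q n k > 0" using SD(2,3)[OF k] by auto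
  have ind: "\<bar>g (k0 + int t) - g k0\<bar> \<le> real t * e" if "real_of_int (k0 + int t) \<le> \<mu> n + T" for t
    using that
  proof (induction t)
    case 0 thus ?case by simp
  next
    case (Suc t)
    have a: "real_of_int (k0 + int t) \<le> \<mu> n + T" using Suc.prems by simp
    have b: "\<mu> n - T \<le> real_of_int (k0 + int t)" unfolding k0_def by linarith
    have "\<bar>real_of_int (k0 + int t) - \<mu> n\<bar> \<le> T" using a b by linarith
    from SD(1)[OF this] have "\<bar>g (k0 + int t + 1) - g (k0 + int t)\<bar> \<le> e" .
    moreover have "\<bar>g (k0 + int t) - g k0\<bar> \<le> real t * e" using Suc.IH[OF a] .
    moreover have "k0 + int (Suc t) = k0 + int t + 1" by simp
    ultimately show ?case by (simp add: algebra_simps)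
  qed
  define t where "t = nat (k - k0)"
  have kk0: "k0 \<le> k" unfolding k0_def using k by linarith
  have kt: "k = k0 + int t" unfolding t_def using kk0 by simp
  have tT: "real t \<le> 2 * T"
  proof -
    have "real t = real_of_int k - real_of_int k0" using kt by simp
    also have "\<dots> \<le> 2 * T" unfolding k0_def using k by linarith
    finally show ?thesis .
  qed
  have "\<bar>g k - g k0\<bar> \<le> real t * e" using ind[of t] k unfolding kt[symmetric] by linarith
  also have "\<dots> \<le> 2 * T * e" using tT e0 by (intro mult_right_mono) auto
  finally show "\<bar>ln (P n k) - ln (Q n k) - (ln (P n \<lceil>\<mu> n - T\<rceil>) - ln (Q n \<lceil>\<mu> n - T\<rceil>))\<bar>
       \<le> 2 * T * (K1 / real n + K2 * U^2 / (real n)^2)"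
    unfolding g_def e_def k0_def .
qed

end


context cwsetup begin

lemma P_nonneg: "P n k \<ge> 0" unfolding P_def by (rule cw_nonneg)
lemma Q_nonneg: "n \<ge> 1 \<Longrightarrow> Q n k \<ge> 0" unfolding Q_def using tp_nonneg s2_pos by simp

lemma K1_ge: "K1 \<ge> 2" "K1 \<ge> 1 / p0" "K1 \<ge> 2 * \<kappa>"
  unfolding K1_def using kappa_pos p0_bounds by auto
lemma K2_ge: "K2 \<ge> 2 / (1 - p0)^2 + 2 / p0^2"
  unfolding K2_def using kappa_pos by simp


lemma P_up_ratio:
  fixes n :: nat and T U :: real
  assumes n1: "n \<ge> 1" and T4: "T \<ge> 4" and UT: "U = T + 3"
    and Up: "U \<le> real n * p0 / 2" "U \<le> real n * (1 - p0) / 2"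
    and nb: "\<beta> \<le> real n * (1 - \<beta>)"
    and H5: "K1 + \<kappa> / 2 + K2 * U^2 / real n \<le> 3 * \<kappa> * T / 8"
    and k: "k \<ge> \<lceil>\<mu> n + T / 2\<rceil>"
  shows "P n (k+1) \<le> exp (- \<kappa> * T / (8 * real n)) * P n k"
proof -
  define b1 where "b1 = \<lceil>\<mu> n + T / 2\<rceil>"
  have nn: "real n > 0" using n1 by simp
  have kp: "\<kappa> > 0" by (rule kappa_pos)
  have U1: "U \<ge> 1" using UT T4 by simp
  have yb: "T / 2 \<le> real_of_int b1 - \<mu> n" "real_of_int b1 - \<mu> n \<le> T / 2 + 1" unfolding b1_def by linarith+
  have yU: "\<bar>real_of_int b1 - \<mu> n\<bar> + 2 \<le> U" using yb UT T4 by auto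
  note LA = LR_approx[OF n1 U1 yU Up]
  define X where "X = real_of_int b1 - \<mu> n + dd n"
  define c where "c = 2 / (1 - p0)^2 + 2 / p0^2"
  have X: "X \<ge> T / 2 - 1 / 2" unfolding X_def using yb dd_bounds[of n] by linarith
  have LR1: "LR n (real_of_int (jj n b1)) \<le> (- X * \<kappa> + (2 * \<beta> - 1 / p0) + c * U^2 / real n) / real n"
  proof -
    have "LR n (real_of_int (jj n b1)) \<le> - X * \<kappa> / real n + (2 * \<beta> - 1 / p0) / real n + c * U^2 / (real n)^2"
      using LA(3) unfolding X_def c_def by linarith
    also have "\<dots> = (- X * \<kappa> + (2 * \<beta> - 1 / p0) + c * U^2 / real n) / real n"
      using nn by (simp add: field_simps power2_eq_square)
    finally show ?thesis .
  qed
  have num: "- X * \<kappa> + (2 * \<beta> - 1 / p0) + c * U^2 / real n \<le> - (\<kappa> * T / 8)"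
  proof -
    have "X * \<kappa> \<ge> (T / 2 - 1 / 2) * \<kappa>" using X kp by (intro mult_right_mono) auto
    hence "X * \<kappa> \<ge> \<kappa> * T / 2 - \<kappa> / 2" by (simp add: algebra_simps)
    moreover have "c * U^2 / real n \<le> K2 * U^2 / real n"
      using K2_ge nn unfolding c_def by (intro divide_right_mono mult_right_mono) auto
    moreover have "2 * \<beta> - 1 / p0 \<le> K1"
    proof -
      have ip: "0 < 1 / p0" using p0_bounds by simp
      thus ?thesis using K1_ge(1) beta1 by linarith
    qed
    moreover have "K1 + \<kappa> / 2 + K2 * U^2 / real n \<le> 3 * (\<kappa> * T) / 8" using H5 by (simp add: mult.assoc)
    ultimately show ?thesis by linarith
  qed
  have LRb: "LR n (real_of_int (jj n b1)) \<le> - \<kappa> * T / (8 * real n)"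
  proof -
    have "(- X * \<kappa> + (2 * \<beta> - 1 / p0) + c * U^2 / real n) / real n \<le> - (\<kappa> * T / 8) / real n"
      using num nn by (intro divide_right_mono) auto
    thus ?thesis using LR1 by (simp add: field_simps)
  qed
  have kb: "b1 \<le> k" using k unfolding b1_def .
  show ?thesis
  proof (cases "jj n k < int n")
    case False
    hence "jj n (k+1) > int n" unfolding jj_def by simp
    hence "P n (k+1) = 0" using P_zero by simp
    thus ?thesis using P_nonneg[of n k] by simp
  next
    case True
    have j0: "0 \<le> jj n k" using LA(1) kb unfolding jj_def by simp
    have "LR n (real_of_int (jj n k)) \<le> LR n (real_of_int (jj n b1))"
      by (rule LR_mono[OF n1 nb]) (use LA(1) kb True in \<open>auto simp: jj_def\<close>)
    hence "exp (LR n (real_of_int (jj n k))) \<le> exp (- \<kappa> * T / (8 * real n))" using LRb by simp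
    hence "P n k * exp (LR n (real_of_int (jj n k))) \<le> P n k * exp (- \<kappa> * T / (8 * real n))"
      by (rule mult_left_mono) (rule P_nonneg)
    thus ?thesis unfolding P_step[OF j0 True] by (simp add: mult.commute)
  qed
qed


lemma P_down_ratio:
  fixes n :: nat and T U :: real
  assumes n1: "n \<ge> 1" and T4: "T \<ge> 4" and UT: "U = T + 3"
    and Up: "U \<le> real n * p0 / 2" "U \<le> real n * (1 - p0) / 2"
    and nb: "\<beta> \<le> real n * (1 - \<beta>)"
    and H5: "K1 + \<kappa> / 2 + K2 * U^2 / real n \<le> 3 * \<kappa> * T / 8"
    and k: "k \<le> \<lfloor>\<mu> n - T / 2\<rfloor>"
  shows "P n (k - 1) \<le> exp (- \<kappa> * T / (8 * real n)) * P n k"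
proof -
  define b3 where "b3 = \<lfloor>\<mu> n - T / 2\<rfloor> - 1"
  have nn: "real n > 0" using n1 by simp
  have kp: "\<kappa> > 0" by (rule kappa_pos)
  have U1: "U \<ge> 1" using UT T4 by simp
  have yb: "real_of_int b3 - \<mu> n \<le> - T / 2 - 1" "- T / 2 - 2 \<le> real_of_int b3 - \<mu> n" unfolding b3_def by linarith+
  have yU: "\<bar>real_of_int b3 - \<mu> n\<bar> + 2 \<le> U" using yb UT T4 by auto
  note LA = LR_approx[OF n1 U1 yU Up]
  define X where "X = - (real_of_int b3 - \<mu> n + dd n)"
  define c where "c = 2 / (1 - p0)^2 + 2 / p0^2"
  have X: "X \<ge> T / 2" unfolding X_def using yb dd_bounds[of n] by linarith
  have LR1: "(X * \<kappa> + (2 * \<beta> - 1 / p0) - c * U^2 / real n) / real n \<le> LR n (real_of_int (jj n b3))"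
  proof -
    have "(X * \<kappa> + (2 * \<beta> - 1 / p0) - c * U^2 / real n) / real n = X * \<kappa> / real n + (2 * \<beta> - 1 / p0) / real n - c * U^2 / (real n)^2"
      using nn by (simp add: field_simps power2_eq_square)
    also have "\<dots> \<le> LR n (real_of_int (jj n b3))"
      using LA(3) unfolding X_def c_def by (simp add: abs_le_iff)
    finally show ?thesis .
  qed
  have num: "\<kappa> * T / 8 \<le> X * \<kappa> + (2 * \<beta> - 1 / p0) - c * U^2 / real n"
  proof -
    have "X * \<kappa> \<ge> T / 2 * \<kappa>" using X kp by (intro mult_right_mono) auto
    hence "X * \<kappa> \<ge> \<kappa> * T / 2" by (simp add: algebra_simps)
    moreover have "c * U^2 / real n \<le> K2 * U^2 / real n"
      using K2_ge nn unfolding c_def by (intro divide_right_mono mult_right_mono) auto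
    moreover have "- K1 \<le> 2 * \<beta> - 1 / p0" using K1_ge(2) beta0 by linarith
    moreover have "K1 + \<kappa> / 2 + K2 * U^2 / real n \<le> 3 * (\<kappa> * T) / 8" using H5 by (simp add: mult.assoc)
    moreover have "0 \<le> \<kappa> / 2" using kp by simp
    ultimately show ?thesis by linarith
  qed
  have LRb: "\<kappa> * T / (8 * real n) \<le> LR n (real_of_int (jj n b3))"
  proof -
    have "(\<kappa> * T / 8) / real n \<le> (X * \<kappa> + (2 * \<beta> - 1 / p0) - c * U^2 / real n) / real n"
      using num nn by (intro divide_right_mono) auto
    thus ?thesis using LR1 by (simp add: field_simps)
  qed
  show ?thesis
  proof (cases "jj n k \<le> 0")
    case True
    hence "jj n (k-1) < 0" unfolding jj_def by simp
    hence "P n (k-1) = 0" using P_zero by simp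
    thus ?thesis using P_nonneg[of n k] by simp
  next
    case False
    define i where "i = k - 1"
    have ki: "k = i + 1" unfolding i_def by simp
    have i0: "0 \<le> jj n i" using False unfolding i_def jj_def by simp
    have ib: "i \<le> b3" unfolding i_def b3_def using k by simp
    have iln: "jj n i < int n" using LA(2) ib unfolding jj_def by simp
    have "LR n (real_of_int (jj n b3)) \<le> LR n (real_of_int (jj n i))"
      by (rule LR_mono[OF n1 nb]) (use i0 ib LA(2) in \<open>auto simp: jj_def\<close>)
    hence le: "\<kappa> * T / (8 * real n) \<le> LR n (real_of_int (jj n i))" using LRb by linarith
    have Pk: "P n k = P n i * exp (LR n (real_of_int (jj n i)))" unfolding ki by (rule P_step[OF i0 iln])
    have "P n i = P n k * exp (- LR n (real_of_int (jj n i)))" unfolding Pk by (simp add: exp_minus_inverse mult.assoc)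
    also have "\<dots> \<le> P n k * exp (- \<kappa> * T / (8 * real n))"
      by (rule mult_left_mono) (use le in simp, rule P_nonneg)
    finally show ?thesis unfolding i_def by (simp add: mult.commute)
  qed
qed

lemma Q_up_ratio:
  fixes n :: nat and T U :: real
  assumes n1: "n \<ge> 1" and T4: "T \<ge> 4" and UT: "U = T + 3"
    and Uk: "U \<le> real n / (2 * \<kappa>)"
    and k: "k \<ge> \<lceil>\<mu> n + T / 2\<rceil>"
  shows "Q n (k+1) \<le> exp (- \<kappa> * T / (8 * real n)) * Q n k"
proof -
  have nn: "real n > 0" using n1 by simp
  have kp: "\<kappa> > 0" by (rule kappa_pos)
  have lb: "real n / \<kappa> \<le> lam n" "lam n < real n / \<kappa> + 1" by (rule lam_bounds)+
  have l0: "lam n > 0" using lb nn kp by (meson divide_pos_pos less_le_trans)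
  have s2p: "s2 n > 0" using s2_pos n1 by simp
  have c: "real_of_int (aa n) + lam n = \<mu> n" by (rule aa_lam)
  have kr: "real_of_int k \<ge> \<mu> n + T / 2" using k by linarith
  have ak: "aa n \<le> k" using kr c l0 T4 by linarith
  have Qr: "Q n (k+1) = Q n k * (lam n / real_of_int (k - aa n + 1))"
    unfolding Q_def lam_def aa_def using tp_ratio[OF s2p] ak unfolding aa_def by simp
  have den: "real_of_int (k - aa n + 1) \<ge> lam n + T / 2" using kr c by simp
  define x where "x = T / (2 * lam n)"
  have nk: "real n / \<kappa> \<ge> 2 * U" using Uk kp by (simp add: field_simps)
  have x0: "0 \<le> x" "x \<le> 1" unfolding x_def using l0 T4 lb(1) nk UT by (auto simp: field_simps)
  have r1: "lam n / real_of_int (k - aa n + 1) \<le> 1 / (1 + x)"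
  proof -
    have "lam n / real_of_int (k - aa n + 1) \<le> lam n / (lam n + T / 2)"
      using den l0 T4 by (intro divide_left_mono) auto
    also have "\<dots> = 1 / (1 + x)" unfolding x_def using l0 by (simp add: field_simps)
    finally show ?thesis .
  qed
  have r2: "1 / (1 + x) \<le> exp (- (x / 2))"
  proof -
    have "exp (x / 2) \<le> 1 + 2 * (x / 2)" using real_exp_bound_lemma[of "x/2"] x0 by simp
    hence "exp (x / 2) \<le> 1 + x" by simp
    hence "1 / (1 + x) \<le> 1 / exp (x / 2)" using x0 by (intro divide_left_mono) auto
    thus ?thesis by (simp add: exp_minus inverse_eq_divide)
  qed
  have r3: "exp (- (x / 2)) \<le> exp (- \<kappa> * T / (8 * real n))"
  proof -
    have "lam n \<le> 2 * (real n / \<kappa>)" using lb nk UT T4 by linarith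
    hence "T / (4 * (2 * (real n / \<kappa>))) \<le> T / (4 * lam n)" using l0 T4 nn kp
      by (intro divide_left_mono) (auto intro!: mult_pos_pos divide_pos_pos)
    moreover have "T / (4 * (2 * (real n / \<kappa>))) = \<kappa> * T / (8 * real n)" using kp by (simp add: field_simps)
    moreover have "x / 2 = T / (4 * lam n)" unfolding x_def by simp
    ultimately show ?thesis by (simp add: ac_simps)
  qed
  have "Q n (k+1) \<le> Q n k * exp (- \<kappa> * T / (8 * real n))"
    unfolding Qr by (rule mult_left_mono[OF order_trans[OF r1 order_trans[OF r2 r3]] Q_nonneg[OF n1]])
  thus ?thesis by (simp add: mult.commute)
qed

lemma Q_down_ratio:
  fixes n :: nat and T U :: real
  assumes n1: "n \<ge> 1" and T4: "T \<ge> 4" and UT: "U = T + 3"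
    and Uk: "U \<le> real n / (2 * \<kappa>)"
    and k: "k \<le> \<lfloor>\<mu> n - T / 2\<rfloor>"
  shows "Q n (k - 1) \<le> exp (- \<kappa> * T / (8 * real n)) * Q n k"
proof (cases "k - 1 < aa n")
  case True
  hence "Q n (k-1) = 0" unfolding Q_def tp_pmf_alt aa_def by simp
  thus ?thesis using Q_nonneg[OF n1, of k] by simp
next
  case False
  have nn: "real n > 0" using n1 by simp
  have kp: "\<kappa> > 0" by (rule kappa_pos)
  have lb: "real n / \<kappa> \<le> lam n" "lam n < real n / \<kappa> + 1" by (rule lam_bounds)+
  have l0: "lam n > 0" using lb nn kp by (meson divide_pos_pos less_le_trans)
  have s2p: "s2 n > 0" using s2_pos n1 by simp
  have c: "real_of_int (aa n) + lam n = \<mu> n" by (rule aa_lam)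
  have kr: "real_of_int k \<le> \<mu> n - T / 2" using k by linarith
  have ak: "aa n \<le> k - 1" using False by simp
  have Qr: "Q n k = Q n (k - 1) * (lam n / real_of_int (k - aa n))"
    using tp_ratio[OF s2p, of "\<mu> n" "k-1"] ak unfolding Q_def lam_def aa_def by simp
  have kpos: "real_of_int (k - aa n) > 0" using ak by simp
  have Qk1: "Q n (k - 1) = Q n k * (real_of_int (k - aa n) / lam n)"
    unfolding Qr using kpos l0 by (simp add: field_simps)
  have num: "real_of_int (k - aa n) \<le> lam n - T / 2" using kr c by simp
  have nk: "real n / \<kappa> \<ge> 2 * U" using Uk kp by (simp add: field_simps)
  have r1: "real_of_int (k - aa n) / lam n \<le> 1 - T / (2 * lam n)"
  proof -
    have "real_of_int (k - aa n) / lam n \<le> (lam n - T / 2) / lam n" using num l0 by (intro divide_right_mono) auto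
    also have "\<dots> = 1 - T / (2 * lam n)" using l0 by (simp add: field_simps)
    finally show ?thesis .
  qed
  have r2: "1 - T / (2 * lam n) \<le> exp (- (T / (2 * lam n)))" using exp_ge_add_one_self[of "- (T / (2 * lam n))"] by simp
  have r3: "exp (- (T / (2 * lam n))) \<le> exp (- \<kappa> * T / (8 * real n))"
  proof -
    have "lam n \<le> 2 * (real n / \<kappa>)" using lb nk UT T4 by linarith
    hence "T / (4 * (2 * (real n / \<kappa>))) \<le> T / (4 * lam n)" using l0 T4 nn kp
      by (intro divide_left_mono) (auto intro!: mult_pos_pos divide_pos_pos)
    moreover have "T / (4 * (2 * (real n / \<kappa>))) = \<kappa> * T / (8 * real n)" using kp by (simp add: field_simps)
    moreover have "T / (4 * lam n) \<le> T / (2 * lam n)" using l0 T4 by (intro divide_left_mono) auto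
    ultimately show ?thesis by (simp add: ac_simps)
  qed
  have "Q n (k-1) \<le> Q n k * exp (- \<kappa> * T / (8 * real n))"
    unfolding Qk1 by (rule mult_left_mono[OF order_trans[OF r1 order_trans[OF r2 r3]] Q_nonneg[OF n1]])
  thus ?thesis by (simp add: mult.commute)
qed

end


lemma tails_generic:
  fixes f :: "int \<Rightarrow> real" and x T c :: real
  assumes nn: "\<And>i. 0 \<le> f i" and le1: "\<And>i. f i \<le> 1" and sm: "f summable_on UNIV"
    and x: "0 < x" "x \<le> 1" and T4: "T \<ge> 4"
    and up: "\<And>k. k \<ge> \<lceil>c + T / 2\<rceil> \<Longrightarrow> f (k+1) \<le> exp (- x) * f k"
    and down: "\<And>k. k \<le> \<lfloor>c - T / 2\<rfloor> \<Longrightarrow> f (k - 1) \<le> exp (- x) * f k"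
  shows "infsum f {k. c + T < real_of_int k} \<le> exp (- x * (T / 2 - 2)) * (2 / x)"
    "infsum f {k. real_of_int k < c - T} \<le> exp (- x * (T / 2 - 2)) * (2 / x)"
proof -
  define \<rho> where "\<rho> = exp (- x)"
  define L where "L = nat (\<lfloor>T / 2\<rfloor> - 1)"
  have r: "0 \<le> \<rho>" "\<rho> < 1" unfolding \<rho>_def using x by auto
  have L1: "real L \<le> T / 2 - 1" "T / 2 - 2 \<le> real L" unfolding L_def using T4 by linarith+
  have bnd: "\<rho>^L / (1 - \<rho>) \<le> exp (- x * (T / 2 - 2)) * (2 / x)"
  proof -
    have "\<rho>^L = exp (- x * real L)" unfolding \<rho>_def by (simp add: exp_of_nat_mult[symmetric] mult.commute)
    also have "\<dots> \<le> exp (- x * (T / 2 - 2))" using L1 x by (simp add: mult_left_mono)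
    finally have a: "\<rho>^L \<le> exp (- x * (T / 2 - 2))" .
    have "1 + x \<le> exp x" by (rule exp_ge_add_one_self)
    hence "\<rho> \<le> 1 / (1 + x)" unfolding \<rho>_def using x by (simp add: exp_minus inverse_eq_divide divide_left_mono)
    hence "1 - \<rho> \<ge> x / (1 + x)" using x by (simp add: field_simps)
    moreover have "x / (1 + x) \<ge> x / 2" using x by (intro divide_left_mono) auto
    ultimately have b: "1 - \<rho> \<ge> x / 2" by linarith
    have "\<rho>^L / (1 - \<rho>) \<le> exp (- x * (T / 2 - 2)) / (x / 2)"
      using a b x r by (intro frac_le) auto
    thus ?thesis by simp
  qed
  have sub: "f summable_on A" for A using sm summable_on_subset by blast
  define b1 where "b1 = \<lceil>c + T / 2\<rceil>"
  have "infsum f {k. c + T < real_of_int k} \<le> infsum f {b1 + int L..}"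
    by (rule infsum_mono2[OF sub sub]) (use L1 nn in \<open>auto simp: b1_def\<close>, linarith)
  also have "\<dots> \<le> \<rho>^L / (1 - \<rho>)"
    by (rule geom_tail_up[OF nn le1 r _ sm]) (use up in \<open>auto simp: b1_def \<rho>_def\<close>)
  finally show "infsum f {k. c + T < real_of_int k} \<le> exp (- x * (T / 2 - 2)) * (2 / x)" using bnd by linarith
  define b2 where "b2 = \<lfloor>c - T / 2\<rfloor>"
  have "infsum f {k. real_of_int k < c - T} \<le> infsum f {..b2 - int L}"
    by (rule infsum_mono2[OF sub sub]) (use L1 nn in \<open>auto simp: b2_def\<close>, linarith)
  also have "\<dots> \<le> \<rho>^L / (1 - \<rho>)"
    by (rule geom_tail_down[OF nn le1 r _ sm]) (use down in \<open>auto simp: b2_def \<rho>_def\<close>)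
  finally show "infsum f {k. real_of_int k < c - T} \<le> exp (- x * (T / 2 - 2)) * (2 / x)" using bnd by linarith
qed

context cwsetup begin

lemma Q_has_sum: "n \<ge> 1 \<Longrightarrow> (Q n has_sum 1) UNIV"
  unfolding Q_def using tp_has_sum s2_pos by simp

lemma Q_max:
  fixes n M :: nat
  assumes n1: "n \<ge> 1" and M1: "M \<ge> 1" and MM: "real M ^ 2 \<le> real n / (2 * \<kappa>)"
  shows "Q n k \<le> 2 / real M"
proof -
  have nn: "real n > 0" using n1 by simp
  have kp: "\<kappa> > 0" by (rule kappa_pos)
  have lb: "real n / \<kappa> \<le> lam n" "lam n < real n / \<kappa> + 1" by (rule lam_bounds)+
  have l0: "lam n > 0" using lb nn kp by (meson divide_pos_pos less_le_trans)
  have s2p: "s2 n > 0" using s2_pos n1 by simp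
  have c: "real_of_int (aa n) + lam n = \<mu> n" by (rule aa_lam)
  have M2: "real M ^ 2 \<le> lam n / 2" using MM lb by (simp add: field_simps)
  have MM1: "real M \<le> real M ^ 2" using M1 by (simp add: power2_eq_square)
  have Ml: "real M \<le> lam n" using M2 MM1 l0 by linarith
  define q where "q = 1 - real M / lam n"
  have q0: "0 \<le> q" unfolding q_def using Ml l0 by (simp add: field_simps)
  have qt: "Q n k / 2 \<le> Q n k * q ^ t" if "t < M" for t
  proof -
    have "1 + real t * (- (real M / lam n)) \<le> (1 + (- (real M / lam n))) ^ t"
      by (rule Bernoulli_inequality) (use Ml l0 in \<open>simp add: field_simps\<close>)
    hence "1 - real t * real M / lam n \<le> q ^ t" unfolding q_def by simp
    moreover have "real t * real M \<le> real M ^ 2" using that by (simp add: power2_eq_square mult_right_mono)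
    hence "real t * real M / lam n \<le> 1 / 2" using M2 l0 by (simp add: field_simps)
    ultimately have "1 / 2 \<le> q ^ t" by linarith
    thus ?thesis using Q_nonneg[OF n1, of k] by (metis mult_left_mono mult.commute times_divide_eq_right mult_1 mult.left_neutral divide_inverse)
  qed
  show ?thesis
  proof (cases "k < aa n")
    case True
    hence "Q n k = 0" unfolding Q_def tp_pmf_alt aa_def by simp
    thus ?thesis by simp
  next
    case False
    hence ak: "aa n \<le> k" by simp
    show ?thesis
    proof (cases "real_of_int k \<le> \<mu> n")
      case True
      have grow: "Q n k * q ^ t \<le> Q n (k + int t)" if "t < M" for t
        using that
      proof (induction t)
        case 0 thus ?case by simp
      next
        case (Suc t)
        have IH: "Q n k * q ^ t \<le> Q n (k + int t)" using Suc by simp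
        have a1: "aa n \<le> k + int t" using ak by simp
        have Qr: "Q n (k + int t + 1) = Q n (k + int t) * (lam n / real_of_int (k + int t - aa n + 1))"
          unfolding Q_def lam_def aa_def using tp_ratio[OF s2p] a1 unfolding aa_def by simp
        have d1: "real_of_int (k + int t - aa n + 1) \<le> lam n + real M" using True c Suc.prems by simp
        have d0: "real_of_int (k + int t - aa n + 1) > 0" using a1 by simp
        have "q \<le> lam n / (lam n + real M)" unfolding q_def using l0 by (simp add: field_simps)
        also have "\<dots> \<le> lam n / real_of_int (k + int t - aa n + 1)" using d1 d0 l0 by (intro divide_left_mono) auto
        finally have qr: "q \<le> lam n / real_of_int (k + int t - aa n + 1)" .
        have "Q n k * q ^ Suc t = (Q n k * q ^ t) * q" by simp
        also have "\<dots> \<le> Q n (k + int t) * (lam n / real_of_int (k + int t - aa n + 1))"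
          by (rule mult_mono[OF IH qr]) (use Q_nonneg[OF n1] q0 in auto)
        also have "\<dots> = Q n (k + int t + 1)" using Qr by simp
        also have "k + int t + 1 = k + int (Suc t)" by simp
        finally show ?case .
      qed
      show ?thesis
      proof (rule block_bound[where g="\<lambda>t. k + int t", OF Q_nonneg[OF n1] Q_has_sum[OF n1]])
        fix t assume "t < M"
        thus "Q n k / 2 \<le> Q n (k + int t)" using qt grow by (meson order_trans)
      qed (use M1 in \<open>auto simp: inj_def\<close>)
    next
      case False
      have grow: "Q n k * q ^ t \<le> Q n (k - int t)" if "t < M" for t
        using that
      proof (induction t)
        case 0 thus ?case by simp
      next
        case (Suc t)
        have IH: "Q n k * q ^ t \<le> Q n (k - int t)" using Suc by simp
        have gt: "real_of_int (k - int t - aa n) > lam n - real t" using False c by simp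
        have tM: "real t + 1 \<le> real M" using Suc.prems by simp
        have gt1: "real_of_int (k - int t - aa n) > 0" using gt tM Ml by linarith
        have a1: "aa n \<le> k - int t - 1" using gt1 by simp
        have Qr: "Q n (k - int t) = Q n (k - int t - 1) * (lam n / real_of_int (k - int t - aa n))"
          using tp_ratio[OF s2p, of "\<mu> n" "k - int t - 1"] a1 unfolding Q_def lam_def aa_def by simp
        have Qr2: "Q n (k - int t - 1) = Q n (k - int t) * (real_of_int (k - int t - aa n) / lam n)"
        proof -
          define r where "r = real_of_int (k - int t - aa n)"
          have r0: "r > 0" using gt1 unfolding r_def .
          have "Q n (k - int t) * (r / lam n) = Q n (k - int t - 1) * ((lam n / r) * (r / lam n))"
            unfolding Qr r_def[symmetric] by (simp add: mult.assoc)
          also have "(lam n / r) * (r / lam n) = 1" using r0 l0 by simp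
          finally show ?thesis unfolding r_def by simp
        qed
        have "q \<le> (lam n - real t) / lam n" unfolding q_def using l0 tM by (simp add: field_simps)
        also have "\<dots> \<le> real_of_int (k - int t - aa n) / lam n" using gt l0 by (intro divide_right_mono) auto
        finally have qr: "q \<le> real_of_int (k - int t - aa n) / lam n" .
        have "Q n k * q ^ Suc t = (Q n k * q ^ t) * q" by simp
        also have "\<dots> \<le> Q n (k - int t) * (real_of_int (k - int t - aa n) / lam n)"
          by (rule mult_mono[OF IH qr]) (use Q_nonneg[OF n1] q0 in auto)
        also have "\<dots> = Q n (k - int t - 1)" using Qr2 by simp
        also have "k - int t - 1 = k - int (Suc t)" by simp
        finally show ?case .
      qed
      show ?thesis
      proof (rule block_bound[where g="\<lambda>t. k - int t", OF Q_nonneg[OF n1] Q_has_sum[OF n1]])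
        fix t assume "t < M"
        thus "Q n k / 2 \<le> Q n (k - int t)" using qt grow by (meson order_trans)
      qed (use M1 in \<open>auto simp: inj_def\<close>)
    qed
  qed
qed

end


lemma single_le_one:
  fixes f :: "int \<Rightarrow> real"
  assumes "\<And>i. 0 \<le> f i" "(f has_sum 1) UNIV"
  shows "f k \<le> 1"
proof -
  have "sum f {k} \<le> infsum f UNIV"
    by (rule finite_sum_le_infsum) (use assms in \<open>auto simp: has_sum_iff\<close>)
  thus ?thesis using assms(2) infsumI by fastforce
qed

lemma single_le_infsum:
  fixes f :: "int \<Rightarrow> real"
  assumes "\<And>i. 0 \<le> f i" "f summable_on UNIV" "k \<in> A"
  shows "f k \<le> infsum f A"
proof -
  have s: "f summable_on A" using summable_on_subset[OF assms(2) subset_UNIV] .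
  have "sum f {k} \<le> infsum f A"
    by (rule finite_sum_le_infsum[OF s]) (use assms in auto)
  thus ?thesis by simp
qed

context cwsetup begin

lemma main_n:
  fixes n M :: nat and T :: real
  assumes n1: "n \<ge> 1" and T4: "T \<ge> 4"
    and Up1: "T + 3 \<le> real n * p0 / 2" and Up2: "T + 3 \<le> real n * (1 - p0) / 2"
    and Uk: "T + 3 \<le> real n / (2 * \<kappa>)"
    and nb: "\<beta> \<le> real n * (1 - \<beta>)"
    and H5: "K1 + \<kappa> / 2 + K2 * (T + 3)^2 / real n \<le> 3 * \<kappa> * T / 8"
    and H6: "2 * T * (K1 / real n + K2 * (T + 3)^2 / (real n)^2) \<le> 1/4"
    and H7: "exp (- (\<kappa> * T / (8 * real n)) * (T / 2 - 2)) * (2 / (\<kappa> * T / (8 * real n))) \<le> 1/4"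
    and M1: "M \<ge> 1" and MM: "real M ^ 2 \<le> real n / (2 * \<kappa>)"
  shows "d_loc (cdf_of (P n)) (cdf_of (Q n))
           \<le> 8 * (2 * T * (K1 / real n + K2 * (T + 3)^2 / (real n)^2)
               + 2 * (exp (- (\<kappa> * T / (8 * real n)) * (T / 2 - 2)) * (2 / (\<kappa> * T / (8 * real n))))) * (2 / real M)
             + exp (- (\<kappa> * T / (8 * real n)) * (T / 2 - 2)) * (2 / (\<kappa> * T / (8 * real n)))"
    "d_TV (cdf_of (P n)) (cdf_of (Q n))
           \<le> (8 * (2 * T * (K1 / real n + K2 * (T + 3)^2 / (real n)^2)
               + 2 * (exp (- (\<kappa> * T / (8 * real n)) * (T / 2 - 2)) * (2 / (\<kappa> * T / (8 * real n)))))
              + 4 * (exp (- (\<kappa> * T / (8 * real n)) * (T / 2 - 2)) * (2 / (\<kappa> * T / (8 * real n))))) / 2"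
proof -
  define U where "U = T + 3"
  define \<epsilon> where "\<epsilon> = 2 * T * (K1 / real n + K2 * (T + 3)^2 / (real n)^2)"
  define x where "x = \<kappa> * T / (8 * real n)"
  define \<tau> where "\<tau> = exp (- x * (T / 2 - 2)) * (2 / x)"
  have nn: "real n > 0" using n1 by simp
  have kp: "\<kappa> > 0" by (rule kappa_pos)
  have x0: "0 < x" "x \<le> 1"
  proof -
    show "0 < x" unfolding x_def using kp T4 nn by simp
    have "\<kappa> * T \<le> \<kappa> * (real n / (2 * \<kappa>))" using Uk kp by (intro mult_left_mono) auto
    also have "\<dots> = real n / 2" using kp by simp
    finally show "x \<le> 1" unfolding x_def using nn by (simp add: field_simps)
  qed
  have ex: "exp (- x) = exp (- \<kappa> * T / (8 * real n))" unfolding x_def by simp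
  have PH: "(P n has_sum 1) UNIV" unfolding P_def by (rule cw_has_sum)
  have QH: "(Q n has_sum 1) UNIV" by (rule Q_has_sum[OF n1])
  have Ps: "P n summable_on UNIV" and Qs: "Q n summable_on UNIV" using PH QH by (auto simp: has_sum_iff)
  have Pnn: "\<And>i. 0 \<le> P n i" by (rule P_nonneg)
  have Qnn: "\<And>i. 0 \<le> Q n i" by (rule Q_nonneg[OF n1])
  have P1: "\<And>i. P n i \<le> 1" by (rule single_le_one[OF Pnn PH])
  have Q1: "\<And>i. Q n i \<le> 1" by (rule single_le_one[OF Qnn QH])
  have UT: "U = T + 3" unfolding U_def ..
  have H5': "K1 + \<kappa> / 2 + K2 * U^2 / real n \<le> 3 * \<kappa> * T / 8" using H5 unfolding U_def .
  note PT = tails_generic[OF Pnn P1 Ps x0 T4, of "\<mu> n"]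
  have PTu: "infsum (P n) {k. \<mu> n + T < real_of_int k} \<le> \<tau>"
    unfolding \<tau>_def by (rule PT(1)) (use P_up_ratio[OF n1 T4 UT Up1[folded U_def] Up2[folded U_def] nb H5'] P_down_ratio[OF n1 T4 UT Up1[folded U_def] Up2[folded U_def] nb H5'] ex in auto)
  have PTd: "infsum (P n) {k. real_of_int k < \<mu> n - T} \<le> \<tau>"
    unfolding \<tau>_def by (rule PT(2)) (use P_up_ratio[OF n1 T4 UT Up1[folded U_def] Up2[folded U_def] nb H5'] P_down_ratio[OF n1 T4 UT Up1[folded U_def] Up2[folded U_def] nb H5'] ex in auto)
  note QT = tails_generic[OF Qnn Q1 Qs x0 T4, of "\<mu> n"]
  have QTu: "infsum (Q n) {k. \<mu> n + T < real_of_int k} \<le> \<tau>"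
    unfolding \<tau>_def by (rule QT(1)) (use Q_up_ratio[OF n1 T4 UT Uk[folded U_def]] Q_down_ratio[OF n1 T4 UT Uk[folded U_def]] ex in auto)
  have QTd: "infsum (Q n) {k. real_of_int k < \<mu> n - T} \<le> \<tau>"
    unfolding \<tau>_def by (rule QT(2)) (use Q_up_ratio[OF n1 T4 UT Uk[folded U_def]] Q_down_ratio[OF n1 T4 UT Uk[folded U_def]] ex in auto)
  define I where "I = {k::int. \<bar>real_of_int k - \<mu> n\<bar> \<le> T}"
  have Ieq: "I = {\<lceil>\<mu> n - T\<rceil>..\<lfloor>\<mu> n + T\<rfloor>}" unfolding I_def by (auto simp: abs_le_iff ceiling_le_iff le_floor_iff)
  have finI: "finite I" unfolding Ieq by simp
  have CI: "-I = {k. \<mu> n + T < real_of_int k} \<union> {k. real_of_int k < \<mu> n - T}" unfolding I_def by auto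
  have disj: "{k. \<mu> n + T < real_of_int k} \<inter> {k::int. real_of_int k < \<mu> n - T} = {}" using T4 by auto
  have tailsum: "infsum f (-I) \<le> 2 * \<tau>" if "f summable_on UNIV" "infsum f {k. \<mu> n + T < real_of_int k} \<le> \<tau>"
    "infsum f {k. real_of_int k < \<mu> n - T} \<le> \<tau>" for f :: "int \<Rightarrow> real"
  proof -
    have "infsum f (-I) = infsum f {k. \<mu> n + T < real_of_int k} + infsum f {k. real_of_int k < \<mu> n - T}"
      unfolding CI by (rule infsum_Un_disjoint[OF _ _ disj]) (use that(1) summable_on_subset in blast)+
    thus ?thesis using that by linarith
  qed
  have PC: "infsum (P n) (-I) \<le> 2 * \<tau>" by (rule tailsum[OF Ps PTu PTd])
  have QC: "infsum (Q n) (-I) \<le> 2 * \<tau>" by (rule tailsum[OF Qs QTu QTd])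
  have sumI: "sum f I = 1 - infsum f (-I)" "0 \<le> infsum f (-I)"
    if "(f has_sum 1) UNIV" "\<And>i. 0 \<le> f i" for f :: "int \<Rightarrow> real"
  proof -
    have s: "f summable_on UNIV" using that(1) by (auto simp: has_sum_iff)
    have "1 = infsum f (I \<union> -I)" using that(1) by (simp add: infsumI)
    also have "\<dots> = infsum f I + infsum f (-I)"
      by (rule infsum_Un_disjoint) (use s summable_on_subset in blast)+
    also have "infsum f I = sum f I" using finI by simp
    finally show "sum f I = 1 - infsum f (-I)" by simp
    show "0 \<le> infsum f (-I)" by (rule infsum_nonneg) (use that(2) in auto)
  qed
  have \<tau>0: "0 \<le> \<tau>" unfolding \<tau>_def using x0 by simp
  have \<tau>4: "\<tau> \<le> 1/4" using H7 unfolding \<tau>_def x_def by simp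
  have e0: "0 \<le> \<epsilon>" unfolding \<epsilon>_def using T4 K_pos nn by simp
  have ch: "P n k > 0" "Q n k > 0" "\<bar>ln (P n k) - ln (Q n k) - (ln (P n \<lceil>\<mu> n - T\<rceil>) - ln (Q n \<lceil>\<mu> n - T\<rceil>))\<bar> \<le> \<epsilon>"
    if "k \<in> I" for k
    using chain[OF n1 _ _ _ Up1[folded U_def] Up2[folded U_def] Uk[folded U_def], of T k] that T4
    unfolding I_def \<epsilon>_def U_def by auto
  have cmp: "\<bar>P n k - Q n k\<bar> \<le> 8 * (\<epsilon> + 2 * \<tau>) * Q n k" if "k \<in> I" for k
  proof (rule compare_window[OF finI _ _ _ e0 _ _ _ _ _ _ _ that])
    show "\<And>k. k \<in> I \<Longrightarrow> 0 < P n k" "\<And>k. k \<in> I \<Longrightarrow> 0 < Q n k" using ch by auto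
    show "\<And>k. k \<in> I \<Longrightarrow> \<bar>ln (P n k) - ln (Q n k) - (ln (P n \<lceil>\<mu> n - T\<rceil>) - ln (Q n \<lceil>\<mu> n - T\<rceil>))\<bar> \<le> \<epsilon>"
      using ch by auto
    show "\<epsilon> \<le> 1/4" using H6 unfolding \<epsilon>_def .
    show "0 \<le> 2 * \<tau>" "2 * \<tau> \<le> 1/2" using \<tau>0 \<tau>4 by auto
    show "1 - 2 * \<tau> \<le> sum (P n) I" "sum (P n) I \<le> 1" using sumI[OF PH Pnn] PC by auto
    show "1 - 2 * \<tau> \<le> sum (Q n) I" "sum (Q n) I \<le> 1" using sumI[OF QH Qnn] QC by auto
  qed
  have Qm: "Q n k \<le> 2 / real M" for k by (rule Q_max[OF n1 M1 MM])
  have out: "\<bar>P n k - Q n k\<bar> \<le> \<tau>" if "k \<notin> I" for k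
  proof -
    have kin: "k \<in> {k. \<mu> n + T < real_of_int k} \<or> k \<in> {k. real_of_int k < \<mu> n - T}" using that CI by auto
    have "P n k \<le> \<tau>" using kin single_le_infsum[OF Pnn Ps] PTu PTd by (meson order_trans)
    moreover have "Q n k \<le> \<tau>" using kin single_le_infsum[OF Qnn Qs] QTu QTd by (meson order_trans)
    ultimately show ?thesis using Pnn[of k] Qnn[of k] by (simp add: abs_le_iff)
  qed
  have loc: "\<bar>P n k - Q n k\<bar> \<le> 8 * (\<epsilon> + 2 * \<tau>) * (2 / real M) + \<tau>" for k
  proof (cases "k \<in> I")
    case True
    have "\<bar>P n k - Q n k\<bar> \<le> 8 * (\<epsilon> + 2 * \<tau>) * Q n k" by (rule cmp[OF True])
    also have "\<dots> \<le> 8 * (\<epsilon> + 2 * \<tau>) * (2 / real M)" using Qm e0 \<tau>0 by (intro mult_left_mono) auto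
    finally show ?thesis using \<tau>0 by linarith
  next
    case False
    have "0 \<le> 8 * (\<epsilon> + 2 * \<tau>) * (2 / real M)" using e0 \<tau>0 by simp
    thus ?thesis using out[OF False] by linarith
  qed
  show "d_loc (cdf_of (P n)) (cdf_of (Q n))
           \<le> 8 * (2 * T * (K1 / real n + K2 * (T + 3)^2 / (real n)^2)
               + 2 * (exp (- (\<kappa> * T / (8 * real n)) * (T / 2 - 2)) * (2 / (\<kappa> * T / (8 * real n))))) * (2 / real M)
             + exp (- (\<kappa> * T / (8 * real n)) * (T / 2 - 2)) * (2 / (\<kappa> * T / (8 * real n)))"
    using d_loc_le[OF Ps Qs loc] unfolding \<epsilon>_def \<tau>_def x_def .
  have tv: "infsum (\<lambda>k. \<bar>P n k - Q n k\<bar>) UNIV \<le> sum (\<lambda>k. 8 * (\<epsilon> + 2 * \<tau>) * Q n k) I + 2 * \<tau> + 2 * \<tau>"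
    by (rule TV_split_bound[OF Ps Qs Pnn Qnn finI cmp PC QC])
  have "sum (\<lambda>k. 8 * (\<epsilon> + 2 * \<tau>) * Q n k) I = 8 * (\<epsilon> + 2 * \<tau>) * sum (Q n) I"
    by (simp add: sum_distrib_left)
  also have "\<dots> \<le> 8 * (\<epsilon> + 2 * \<tau>) * 1" using sumI[OF QH Qnn] e0 \<tau>0 by (intro mult_left_mono) auto
  finally have tv2: "infsum (\<lambda>k. \<bar>P n k - Q n k\<bar>) UNIV \<le> 8 * (\<epsilon> + 2 * \<tau>) + 4 * \<tau>" using tv by linarith
  show "d_TV (cdf_of (P n)) (cdf_of (Q n))
           \<le> (8 * (2 * T * (K1 / real n + K2 * (T + 3)^2 / (real n)^2)
               + 2 * (exp (- (\<kappa> * T / (8 * real n)) * (T / 2 - 2)) * (2 / (\<kappa> * T / (8 * real n)))))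
              + 4 * (exp (- (\<kappa> * T / (8 * real n)) * (T / 2 - 2)) * (2 / (\<kappa> * T / (8 * real n))))) / 2"
    unfolding d_TV_eq[OF Ps Qs] using tv2 unfolding \<epsilon>_def \<tau>_def x_def by (simp add: divide_right_mono)
qed

end


lemma F3: assumes "c > 0" shows "eventually (\<lambda>n::nat. exp (- (c * real n powr (5/9) / (8 * real n)) * (real n powr (5/9) / 2 - 2)) * (2 / (c * real n powr (5/9) / (8 * real n))) \<le> 1 / real n) sequentially"
  using assms by real_asymp
lemma F1: "eventually (\<lambda>n::nat. 2 * real n powr (5/9) / real n \<le> real n powr (-1/3)) sequentially" by real_asymp
lemma F2: "eventually (\<lambda>n::nat. 2 * real n powr (5/9) * (real n powr (5/9) + 3)^2 / (real n)^2 \<le> 3 * real n powr (-1/3)) sequentially" by real_asymp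
lemma F4: "eventually (\<lambda>n::nat. real n powr (-1/3) / sqrt (real n) \<le> real n powr (-3/4)) sequentially" by real_asymp
lemma F5: "eventually (\<lambda>n::nat. (1 / real n) / sqrt (real n) \<le> real n powr (-3/4)) sequentially" by real_asymp
lemma F6: "eventually (\<lambda>n::nat. 1 / real n \<le> real n powr (-3/4)) sequentially" by real_asymp
lemma F7: "eventually (\<lambda>n::nat. 1 / real n \<le> real n powr (-1/3)) sequentially" by real_asymp
lemma L1: "((\<lambda>n::nat. (real n powr (5/9) + 3) / real n) \<longlongrightarrow> 0) sequentially" by real_asymp
lemma L2: "((\<lambda>n::nat. 1 / real n powr (5/9)) \<longlongrightarrow> 0) sequentially" by real_asymp
lemma L3: "((\<lambda>n::nat. (real n powr (5/9) + 3)^2 / real n / real n powr (5/9)) \<longlongrightarrow> 0) sequentially" by real_asymp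
lemma L4: "((\<lambda>n::nat. 2 * real n powr (5/9) / real n) \<longlongrightarrow> 0) sequentially" by real_asymp
lemma L5: "((\<lambda>n::nat. 2 * real n powr (5/9) * (real n powr (5/9) + 3)^2 / (real n)^2) \<longlongrightarrow> 0) sequentially" by real_asymp
lemma E1: "eventually (\<lambda>n::nat. real n powr (5/9) \<ge> 4) sequentially" by real_asymp
lemma E2: "eventually (\<lambda>n::nat. real n \<ge> c) sequentially"
  using filterlim_real_sequentially filterlim_at_top by blast

lemma ev_scaled:
  fixes f :: "nat \<Rightarrow> real"
  assumes "(f \<longlongrightarrow> 0) sequentially" "c > 0"
  shows "eventually (\<lambda>n. f n < c) sequentially"
  using order_tendstoD(2)[OF assms] .

context cwsetup begin

lemma eventually_bounds:
  "\<exists>C. eventually (\<lambda>n. d_loc (cdf_of (P n)) (cdf_of (Q n)) \<le> C * real n powr (-3/4)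
                      \<and> d_TV (cdf_of (P n)) (cdf_of (Q n)) \<le> C * real n powr (-1/3)) sequentially"
proof -
  have kp: "\<kappa> > 0" by (rule kappa_pos)
  have p: "0 < p0" "p0 < 1" by (rule p0_bounds)+
  have K: "K1 > 0" "K2 > 0" by (rule K_pos)+
  define T where "T = (\<lambda>n::nat. real n powr (5/9))"
  define C1 where "C1 = 32 * sqrt (2 * \<kappa>) * (K1 + 3 * K2 + 2) + 1"
  define C2 where "C2 = 4 * (K1 + 3 * K2) + 10"
  have ev1: "eventually (\<lambda>n. real n \<ge> max 4 (8 * \<kappa>)) sequentially" by (rule E2)
  have evU1: "eventually (\<lambda>n. T n + 3 \<le> real n * p0 / 2) sequentially"
  proof -
    have "eventually (\<lambda>n. (T n + 3) / real n < p0 / 2) sequentially"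
      unfolding T_def by (rule ev_scaled[OF L1]) (use p in simp)
    thus ?thesis using ev1
      by eventually_elim (auto simp: field_simps)
  qed
  have evU2: "eventually (\<lambda>n. T n + 3 \<le> real n * (1 - p0) / 2) sequentially"
  proof -
    have "eventually (\<lambda>n. (T n + 3) / real n < (1 - p0) / 2) sequentially"
      unfolding T_def by (rule ev_scaled[OF L1]) (use p in simp)
    thus ?thesis using ev1
      by eventually_elim (auto simp: field_simps)
  qed
  have evUk: "eventually (\<lambda>n. T n + 3 \<le> real n / (2 * \<kappa>)) sequentially"
  proof -
    have "eventually (\<lambda>n. (T n + 3) / real n < 1 / (2 * \<kappa>)) sequentially"
      unfolding T_def by (rule ev_scaled[OF L1]) (use kp in simp)
    thus ?thesis using ev1
      by eventually_elim (use kp in \<open>auto simp: field_simps\<close>)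
  qed
  have evnb: "eventually (\<lambda>n. \<beta> \<le> real n * (1 - \<beta>)) sequentially"
  proof -
    have "eventually (\<lambda>n. real n \<ge> \<beta> / (1 - \<beta>)) sequentially" by (rule E2)
    thus ?thesis by eventually_elim (use beta1 in \<open>simp add: field_simps\<close>)
  qed
  have evH5: "eventually (\<lambda>n. K1 + \<kappa> / 2 + K2 * (T n + 3)^2 / real n \<le> 3 * \<kappa> * T n / 8) sequentially"
  proof -
    have "((\<lambda>n. (K1 + \<kappa> / 2) * (1 / T n) + K2 * ((T n + 3)^2 / real n / T n)) \<longlongrightarrow> (K1 + \<kappa> / 2) * 0 + K2 * 0) sequentially"
      unfolding T_def by (intro tendsto_intros L2 L3)
    hence "eventually (\<lambda>n. (K1 + \<kappa> / 2) * (1 / T n) + K2 * ((T n + 3)^2 / real n / T n) < 3 * \<kappa> / 8) sequentially"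
      using kp by (intro ev_scaled) auto
    moreover have "eventually (\<lambda>n. T n \<ge> 4) sequentially" unfolding T_def by (rule E1)
    ultimately show ?thesis
    proof eventually_elim
      case (elim n)
      have T0: "T n > 0" using elim(2) by simp
      have "(K1 + \<kappa> / 2 + K2 * (T n + 3)^2 / real n) = ((K1 + \<kappa> / 2) * (1 / T n) + K2 * ((T n + 3)^2 / real n / T n)) * T n"
        using T0 by (simp add: field_simps)
      also have "\<dots> \<le> (3 * \<kappa> / 8) * T n" using elim(1) T0 by (intro mult_right_mono) auto
      finally show ?case by simp
    qed
  qed
  have evH6: "eventually (\<lambda>n. 2 * T n * (K1 / real n + K2 * (T n + 3)^2 / (real n)^2) \<le> 1/4) sequentially"
  proof -
    have "((\<lambda>n. K1 * (2 * T n / real n) + K2 * (2 * T n * (T n + 3)^2 / (real n)^2)) \<longlongrightarrow> K1 * 0 + K2 * 0) sequentially"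
      unfolding T_def by (intro tendsto_intros L4 L5)
    hence "eventually (\<lambda>n. K1 * (2 * T n / real n) + K2 * (2 * T n * (T n + 3)^2 / (real n)^2) < 1/4) sequentially"
      by (intro ev_scaled) auto
    thus ?thesis by eventually_elim (simp add: algebra_simps)
  qed
  have evF1: "eventually (\<lambda>n. 2 * T n / real n \<le> real n powr (-1/3)) sequentially" unfolding T_def by (rule F1)
  have evF2: "eventually (\<lambda>n. 2 * T n * (T n + 3)^2 / (real n)^2 \<le> 3 * real n powr (-1/3)) sequentially" unfolding T_def by (rule F2)
  have evF3: "eventually (\<lambda>n. exp (- (\<kappa> * T n / (8 * real n)) * (T n / 2 - 2)) * (2 / (\<kappa> * T n / (8 * real n))) \<le> 1 / real n) sequentially"
    unfolding T_def by (rule F3[OF kp])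
  have evT: "eventually (\<lambda>n. T n \<ge> 4) sequentially" unfolding T_def by (rule E1)
  have evall: "eventually (\<lambda>n. real n \<ge> max 4 (8 * \<kappa>) \<and> T n + 3 \<le> real n * p0 / 2 \<and> T n + 3 \<le> real n * (1 - p0) / 2
      \<and> T n + 3 \<le> real n / (2 * \<kappa>) \<and> \<beta> \<le> real n * (1 - \<beta>)
      \<and> K1 + \<kappa> / 2 + K2 * (T n + 3)^2 / real n \<le> 3 * \<kappa> * T n / 8
      \<and> 2 * T n * (K1 / real n + K2 * (T n + 3)^2 / (real n)^2) \<le> 1/4
      \<and> 2 * T n / real n \<le> real n powr (-1/3) \<and> 2 * T n * (T n + 3)^2 / (real n)^2 \<le> 3 * real n powr (-1/3)
      \<and> exp (- (\<kappa> * T n / (8 * real n)) * (T n / 2 - 2)) * (2 / (\<kappa> * T n / (8 * real n))) \<le> 1 / real n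
      \<and> T n \<ge> 4 \<and> real n powr (-1/3) / sqrt (real n) \<le> real n powr (-3/4)
      \<and> (1 / real n) / sqrt (real n) \<le> real n powr (-3/4) \<and> 1 / real n \<le> real n powr (-3/4)
      \<and> 1 / real n \<le> real n powr (-1/3)) sequentially"
    by (intro eventually_conj ev1 evU1 evU2 evUk evnb evH5 evH6 evF1 evF2 evF3 evT F4 F5 F6 F7)
  show ?thesis
  proof (rule exI[of _ "C1 + C2"], use evall in eventually_elim, elim conjE)
    fix n :: nat
    assume n4: "real n \<ge> max 4 (8 * \<kappa>)" and U1: "T n + 3 \<le> real n * p0 / 2" and U2: "T n + 3 \<le> real n * (1 - p0) / 2"
      and Uk: "T n + 3 \<le> real n / (2 * \<kappa>)" and nb: "\<beta> \<le> real n * (1 - \<beta>)"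
      and H5: "K1 + \<kappa> / 2 + K2 * (T n + 3)^2 / real n \<le> 3 * \<kappa> * T n / 8"
      and H6: "2 * T n * (K1 / real n + K2 * (T n + 3)^2 / (real n)^2) \<le> 1/4"
      and f1: "2 * T n / real n \<le> real n powr (-1/3)" and f2: "2 * T n * (T n + 3)^2 / (real n)^2 \<le> 3 * real n powr (-1/3)"
      and f3: "exp (- (\<kappa> * T n / (8 * real n)) * (T n / 2 - 2)) * (2 / (\<kappa> * T n / (8 * real n))) \<le> 1 / real n"
      and T4: "T n \<ge> 4" and f4: "real n powr (-1/3) / sqrt (real n) \<le> real n powr (-3/4)"
      and f5: "(1 / real n) / sqrt (real n) \<le> real n powr (-3/4)" and f6: "1 / real n \<le> real n powr (-3/4)"
      and f7: "1 / real n \<le> real n powr (-1/3)"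
    have n1: "n \<ge> 1" using n4 by simp
    have nn: "real n > 0" using n1 by simp
    define s where "s = sqrt (real n / (2 * \<kappa>))"
    define M where "M = nat \<lfloor>s\<rfloor>"
    have s2: "s \<ge> 2"
    proof -
      have "real n / (2 * \<kappa>) \<ge> 4" using n4 kp by (simp add: field_simps)
      hence "sqrt (real n / (2 * \<kappa>)) \<ge> sqrt 4" by (rule real_sqrt_le_mono)
      thus ?thesis unfolding s_def by simp
    qed
    have Ms: "real M \<le> s" "s - 1 \<le> real M" unfolding M_def using s2 by linarith+
    have M1: "M \<ge> 1" using Ms s2 by linarith
    have MM: "real M ^ 2 \<le> real n / (2 * \<kappa>)"
    proof -
      have "real M ^ 2 \<le> s ^ 2" using Ms by (intro power_mono) auto
      also have "\<dots> = real n / (2 * \<kappa>)" unfolding s_def using kp by simp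
      finally show ?thesis .
    qed
    have Mb: "2 / real M \<le> 4 * sqrt (2 * \<kappa>) * (1 / sqrt (real n))"
    proof -
      have "2 / real M \<le> 2 / (s / 2)" using Ms s2 M1 by (intro divide_left_mono) auto
      also have "\<dots> = 4 / s" by simp
      also have "s = sqrt (real n) / sqrt (2 * \<kappa>)" unfolding s_def by (simp add: real_sqrt_divide)
      also have "4 / (sqrt (real n) / sqrt (2 * \<kappa>)) = 4 * sqrt (2 * \<kappa>) * (1 / sqrt (real n))" by simp
      finally show ?thesis .
    qed
    note MN = main_n[OF n1 T4 U1 U2 Uk nb H5 H6 _ M1 MM]
    define eps where "eps = 2 * T n * (K1 / real n + K2 * (T n + 3)^2 / (real n)^2)"
    define tau where "tau = exp (- (\<kappa> * T n / (8 * real n)) * (T n / 2 - 2)) * (2 / (\<kappa> * T n / (8 * real n)))"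
    have tau0: "0 \<le> tau" "tau \<le> 1 / real n" unfolding tau_def using f3 kp T4 nn by auto
    have "1 / real n \<le> 1 / 4" using n4 by (intro divide_left_mono) auto
    hence tau4: "tau \<le> 1/4" using tau0 by linarith
    have eps0: "0 \<le> eps" unfolding eps_def using T4 K nn by simp
    have epsb: "eps \<le> (K1 + 3 * K2) * real n powr (-1/3)"
    proof -
      have "eps = K1 * (2 * T n / real n) + K2 * (2 * T n * (T n + 3)^2 / (real n)^2)"
        unfolding eps_def by (simp add: algebra_simps)
      also have "\<dots> \<le> K1 * real n powr (-1/3) + K2 * (3 * real n powr (-1/3))"
        using f1 f2 K by (intro add_mono mult_left_mono) auto
      finally show ?thesis by (simp add: algebra_simps)
    qed
    have dl: "d_loc (cdf_of (P n)) (cdf_of (Q n)) \<le> 8 * (eps + 2 * tau) * (2 / real M) + tau"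
      using MN(1)[OF tau4[unfolded tau_def]] unfolding eps_def tau_def .
    have dt: "d_TV (cdf_of (P n)) (cdf_of (Q n)) \<le> (8 * (eps + 2 * tau) + 4 * tau) / 2"
      using MN(2)[OF tau4[unfolded tau_def]] unfolding eps_def tau_def .
    have et: "eps + 2 * tau \<le> (K1 + 3 * K2) * real n powr (-1/3) + 2 * (1 / real n)" using epsb tau0 by linarith
    have sq: "0 \<le> sqrt (2 * \<kappa>)" using kp by simp
    have "8 * (eps + 2 * tau) * (2 / real M) \<le> 8 * ((K1 + 3 * K2) * real n powr (-1/3) + 2 * (1 / real n)) * (4 * sqrt (2 * \<kappa>) * (1 / sqrt (real n)))"
      using et Mb eps0 tau0 M1 kp by (intro mult_mono) auto
    also have "\<dots> = 32 * sqrt (2 * \<kappa>) * ((K1 + 3 * K2) * (real n powr (-1/3) / sqrt (real n)) + 2 * ((1 / real n) / sqrt (real n)))"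
      by (simp add: algebra_simps add_divide_distrib)
    also have "\<dots> \<le> 32 * sqrt (2 * \<kappa>) * ((K1 + 3 * K2) * real n powr (-3/4) + 2 * real n powr (-3/4))"
      using f4 f5 K sq by (intro mult_left_mono add_mono) auto
    also have "\<dots> = (C1 - 1) * real n powr (-3/4)" unfolding C1_def by (simp add: algebra_simps)
    finally have "d_loc (cdf_of (P n)) (cdf_of (Q n)) \<le> (C1 - 1) * real n powr (-3/4) + real n powr (-3/4)"
      using dl tau0 f6 by linarith
    also have "\<dots> = C1 * real n powr (-3/4)" by (simp add: algebra_simps)
    also have "\<dots> \<le> (C1 + C2) * real n powr (-3/4)"
      using K unfolding C2_def by (intro mult_right_mono) auto
    finally have dlb: "d_loc (cdf_of (P n)) (cdf_of (Q n)) \<le> (C1 + C2) * real n powr (-3/4)" .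
    have "(8 * (eps + 2 * tau) + 4 * tau) / 2 = 4 * eps + 10 * tau" by (simp add: algebra_simps)
    hence "d_TV (cdf_of (P n)) (cdf_of (Q n)) \<le> 4 * eps + 10 * tau" using dt by simp
    also have "\<dots> \<le> 4 * ((K1 + 3 * K2) * real n powr (-1/3)) + 10 * real n powr (-1/3)"
      using epsb tau0 f7 by linarith
    also have "\<dots> = C2 * real n powr (-1/3)" unfolding C2_def by (simp add: algebra_simps)
    also have "\<dots> \<le> (C1 + C2) * real n powr (-1/3)"
      unfolding C1_def using K sq by (intro mult_right_mono) auto
    finally have dtb: "d_TV (cdf_of (P n)) (cdf_of (Q n)) \<le> (C1 + C2) * real n powr (-1/3)" .
    show "d_loc (cdf_of (P n)) (cdf_of (Q n)) \<le> (C1 + C2) * real n powr (-3/4)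
        \<and> d_TV (cdf_of (P n)) (cdf_of (Q n)) \<le> (C1 + C2) * real n powr (-1/3)" using dlb dtb by blast
  qed
qed

end


lemma pmf_trivial_bounds:
  fixes p q :: "int \<Rightarrow> real"
  assumes pn: "\<And>k. 0 \<le> p k" and qn: "\<And>k. 0 \<le> q k" and ph: "(p has_sum 1) UNIV" and qh: "(q has_sum 1) UNIV"
  shows "d_loc (cdf_of p) (cdf_of q) \<le> 1" "d_TV (cdf_of p) (cdf_of q) \<le> 1" "0 \<le> d_loc (cdf_of p) (cdf_of q)"
proof -
  have ps: "p summable_on UNIV" and qs: "q summable_on UNIV" using ph qh by (auto simp: has_sum_iff)
  have p1: "p k \<le> 1" and q1: "q k \<le> 1" for k using single_le_one pn qn ph qh by blast+
  have ab: "\<bar>p k - q k\<bar> \<le> 1" for k using p1[of k] q1[of k] pn[of k] qn[of k] by (simp add: abs_le_iff)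
  show "d_loc (cdf_of p) (cdf_of q) \<le> 1" by (rule d_loc_le[OF ps qs ab])
  have "infsum (\<lambda>k. \<bar>p k - q k\<bar>) UNIV \<le> infsum (\<lambda>k. p k + q k) UNIV"
    by (rule infsum_mono[OF abs_diff_summable[OF ps qs pn qn] summable_on_add[OF ps qs]])
       (use pn qn in \<open>auto intro: abs_diff_le_sum\<close>)
  also have "\<dots> = infsum p UNIV + infsum q UNIV" by (rule infsum_add[OF ps qs])
  also have "\<dots> = 2" using ph qh by (simp add: infsumI)
  finally show "d_TV (cdf_of p) (cdf_of q) \<le> 1" unfolding d_TV_eq[OF ps qs] by simp
  have bdd: "bdd_above (range (\<lambda>j. \<bar>Delta (cdf_of p) j - Delta (cdf_of q) j\<bar>))"
    unfolding Delta_cdf[OF ps] Delta_cdf[OF qs] using ab by (intro bdd_aboveI) auto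
  have "0 \<le> \<bar>Delta (cdf_of p) 0 - Delta (cdf_of q) 0\<bar>" by simp
  also have "\<dots> \<le> d_loc (cdf_of p) (cdf_of q)" unfolding d_loc_def by (rule cSUP_upper[OF _ bdd]) simp
  finally show "0 \<le> d_loc (cdf_of p) (cdf_of q)" .
qed

lemma powr_ge_inv:
  fixes n :: nat and a :: real
  assumes "n \<ge> 1" "a \<le> 1" "0 \<le> a"
  shows "1 / real n \<le> real n powr (- a)"
proof -
  have "real n powr (-1) \<le> real n powr (- a)" using assms by (intro powr_mono) auto
  thus ?thesis using assms by (simp add: powr_minus_divide)
qed

theorem theorem10:
  fixes \<beta> :: real
  assumes "0 < \<beta>" and "\<beta> < 1"
  shows "(\<exists>C. \<forall>n::nat. n \<ge> 1 \<longrightarrow>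
            d_loc (cdf_of (cw_pmf \<beta> 0 n)) (cdf_of (tp_pmf 0 (real n / (4 * (1 - \<beta>)))))
              \<le> C * real n powr (-3/4) \<and>
            d_TV (cdf_of (cw_pmf \<beta> 0 n)) (cdf_of (tp_pmf 0 (real n / (4 * (1 - \<beta>)))))
              \<le> C * real n powr (-1/3))
       \<and> (\<forall>h m0. m0 = tanh (\<beta> * m0 + h) \<longrightarrow>
            (\<lambda>n::nat. d_loc (cdf_of (cw_pmf \<beta> h n))
               (cdf_of (tp_pmf (real n * m0 / 2)
                  (real n * (1 - m0\<^sup>2) / (4 * (1 - \<beta> + \<beta> * m0\<^sup>2))))))
            \<in> o(\<lambda>n. real n powr (-1/2)))"
proof (intro conjI allI impI)
  interpret A: cwsetup \<beta> 0 0 by unfold_locales (use assms in auto)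
  have PQ: "A.P n = cw_pmf \<beta> 0 n" "A.Q n = tp_pmf 0 (real n / (4 * (1 - \<beta>)))" for n
    unfolding A.P_def A.Q_def A.\<mu>_def A.s2_def by simp_all
  obtain C where ev: "eventually (\<lambda>n. d_loc (cdf_of (A.P n)) (cdf_of (A.Q n)) \<le> C * real n powr (-3/4)
                      \<and> d_TV (cdf_of (A.P n)) (cdf_of (A.Q n)) \<le> C * real n powr (-1/3)) sequentially"
    using A.eventually_bounds by blast
  then obtain N where N: "\<And>n. n \<ge> N \<Longrightarrow> d_loc (cdf_of (A.P n)) (cdf_of (A.Q n)) \<le> C * real n powr (-3/4)
                      \<and> d_TV (cdf_of (A.P n)) (cdf_of (A.Q n)) \<le> C * real n powr (-1/3)"
    unfolding eventually_sequentially by blast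
  show "\<exists>C. \<forall>n::nat. n \<ge> 1 \<longrightarrow>
            d_loc (cdf_of (cw_pmf \<beta> 0 n)) (cdf_of (tp_pmf 0 (real n / (4 * (1 - \<beta>)))))
              \<le> C * real n powr (-3/4) \<and>
            d_TV (cdf_of (cw_pmf \<beta> 0 n)) (cdf_of (tp_pmf 0 (real n / (4 * (1 - \<beta>)))))
              \<le> C * real n powr (-1/3)"
  proof (rule exI[of _ "max C (real N)"], intro allI impI)
    fix n :: nat assume n1: "n \<ge> 1"
    have TB: "d_loc (cdf_of (A.P n)) (cdf_of (A.Q n)) \<le> 1" "d_TV (cdf_of (A.P n)) (cdf_of (A.Q n)) \<le> 1"
      using pmf_trivial_bounds[OF A.P_nonneg A.Q_nonneg[OF n1] _ A.Q_has_sum[OF n1]] cw_has_sum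
      unfolding A.P_def by auto
    have pw: "0 \<le> real n powr (-3/4)" "0 \<le> real n powr (-1/3)" by simp_all
    have "d_loc (cdf_of (A.P n)) (cdf_of (A.Q n)) \<le> max C (real N) * real n powr (-3/4)
        \<and> d_TV (cdf_of (A.P n)) (cdf_of (A.Q n)) \<le> max C (real N) * real n powr (-1/3)"
    proof (cases "n \<ge> N")
      case True
      have "C * real n powr (-3/4) \<le> max C (real N) * real n powr (-3/4)"
        "C * real n powr (-1/3) \<le> max C (real N) * real n powr (-1/3)"
        using pw by (intro mult_right_mono; simp)+
      thus ?thesis using N[OF True] by linarith
    next
      case False
      have nN: "real n \<le> real N" using False by simp
      have a: "1 \<le> real N * real n powr (- a)" if "0 \<le> a" "a \<le> 1" for a :: real
      proof -
        have "1 = real n * (1 / real n)" using n1 by simp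
        also have "\<dots> \<le> real N * real n powr (- a)"
          using powr_ge_inv[OF n1 that(2,1)] nN n1 by (intro mult_mono) auto
        finally show ?thesis .
      qed
      have "real N * real n powr (-3/4) \<le> max C (real N) * real n powr (-3/4)"
        "real N * real n powr (-1/3) \<le> max C (real N) * real n powr (-1/3)"
        using pw by (intro mult_right_mono; simp)+
      moreover have "1 \<le> real N * real n powr (-3/4)" using a[of "3/4"] by simp
      moreover have "1 \<le> real N * real n powr (-1/3)" using a[of "1/3"] by simp
      ultimately show ?thesis using TB by linarith
    qed
    thus "d_loc (cdf_of (cw_pmf \<beta> 0 n)) (cdf_of (tp_pmf 0 (real n / (4 * (1 - \<beta>)))))
              \<le> max C (real N) * real n powr (-3/4) \<and>
            d_TV (cdf_of (cw_pmf \<beta> 0 n)) (cdf_of (tp_pmf 0 (real n / (4 * (1 - \<beta>)))))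
              \<le> max C (real N) * real n powr (-1/3)" unfolding PQ .
  qed
next
  fix h m0 :: real
  assume m: "m0 = tanh (\<beta> * m0 + h)"
  interpret B: cwsetup \<beta> h m0 by unfold_locales (use assms m in auto)
  obtain C where ev: "eventually (\<lambda>n. d_loc (cdf_of (B.P n)) (cdf_of (B.Q n)) \<le> C * real n powr (-3/4)
                      \<and> d_TV (cdf_of (B.P n)) (cdf_of (B.Q n)) \<le> C * real n powr (-1/3)) sequentially"
    using B.eventually_bounds by blast
  have ev1: "eventually (\<lambda>n::nat. n \<ge> 1) sequentially" by (rule eventually_ge_at_top)
  have "(\<lambda>n. d_loc (cdf_of (B.P n)) (cdf_of (B.Q n))) \<in> O(\<lambda>n. real n powr (-3/4))"
  proof (rule bigoI[where c=C])
    show "eventually (\<lambda>n. norm (d_loc (cdf_of (B.P n)) (cdf_of (B.Q n))) \<le> C * norm (real n powr (-3/4))) sequentially"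
      using ev ev1
    proof eventually_elim
      case (elim n)
      have "0 \<le> d_loc (cdf_of (B.P n)) (cdf_of (B.Q n))"
        using pmf_trivial_bounds(3)[OF B.P_nonneg B.Q_nonneg[OF elim(2)] _ B.Q_has_sum[OF elim(2)]] cw_has_sum
        unfolding B.P_def by auto
      thus ?case using elim(1) by simp
    qed
  qed
  moreover have "(\<lambda>n::nat. real n powr (-3/4)) \<in> o(\<lambda>n. real n powr (-1/2))" by real_asymp
  ultimately have "(\<lambda>n. d_loc (cdf_of (B.P n)) (cdf_of (B.Q n))) \<in> o(\<lambda>n. real n powr (-1/2))"
    by (rule landau_o.big_small_trans)
  thus "(\<lambda>n::nat. d_loc (cdf_of (cw_pmf \<beta> h n))
               (cdf_of (tp_pmf (real n * m0 / 2)
                  (real n * (1 - m0\<^sup>2) / (4 * (1 - \<beta> + \<beta> * m0\<^sup>2))))))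
            \<in> o(\<lambda>n. real n powr (-1/2))" unfolding B.P_def B.Q_def B.\<mu>_def B.s2_def .
qed


end
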